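(* Let $\Bbbk$ be a field of characteristic zero and $h,c\in\Bbbk$. Regarded as a module over the subalgebra $\mathcal O=\mathrm{span}\{L_n-L_{-n}\mid n\geq 1\}$ of the Virasoro algebra, the Verma module $V(h,c)$ is a free $U(\mathcal O)$-module of rank $1$; that is, $V(h,c)\cong U(\mathcal O)$ as $\mathcal O$-modules.
   Context: The Virasoro algebra $\mathrm{Vir}$ over $\Bbbk$ has basis $\{L_n\mid n\in\mathbb{Z}\}\cup\{C\}$ with $C$ central and $[L_n,L_m]=(n-m)L_{n+m}+\frac1{12}n(n^2-1)\delta_{m,-n}C$. Let $\mathrm{Vir}_+=\mathrm{span}\{L_n\mid n>0\}$, $\mathrm{Vir}_0=\Bbbk L_0\oplus\Bbbk C$. The Verma module is $V(h,c)=\mathrm{Ind}_{\mathrm{Vir}_0\oplus\mathrm{Vir}_+}^{\mathrm{Vir}}\Bbbk|h,c\rangle$, where $L_0$ acts on $|h,c\rangle$ by $h$, $C$ by $c$, and $\mathrm{Vir}_+$ by $0$. *)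

theory Defs
  imports "HOL-Library.Poly_Mapping"
begin

text \<open>For a Lie algebra
with basis indexed by 'a, its tensor algebra T is the type of finitely supported maps from words to k: a word
[a1,...,an] stands for the monomial x_a1 ... x_an.\<close>

definition smult :: "'k::semiring_0 \<Rightarrow> ('a \<Rightarrow>\<^sub>0 'k) \<Rightarrow> ('a \<Rightarrow>\<^sub>0 'k)" where
  "smult a p = Poly_Mapping.map (\<lambda>x. a * x) p"

inductive_set lspan :: "('a \<Rightarrow>\<^sub>0 'k::semiring_0) set \<Rightarrow> ('a \<Rightarrow>\<^sub>0 'k) set"
  for S where
  lspan_zero: "0 \<in> lspan S"
| lspan_step: "x \<in> S \<Longrightarrow> y \<in> lspan S \<Longrightarrow> smult a x + y \<in> lspan S"

definition tmul :: "('a list \<Rightarrow>\<^sub>0 'k::semiring_0) \<Rightarrow> ('a list \<Rightarrow>\<^sub>0 'k) \<Rightarrow> ('a list \<Rightarrow>\<^sub>0 'k)" where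
  "tmul p q = (\<Sum>x\<in>Poly_Mapping.keys p. \<Sum>y\<in>Poly_Mapping.keys q. Poly_Mapping.single (x @ y) (Poly_Mapping.lookup p x * Poly_Mapping.lookup q y))"

definition deg1 :: "('a \<Rightarrow>\<^sub>0 'k::semiring_0) \<Rightarrow> ('a list \<Rightarrow>\<^sub>0 'k)" where
  "deg1 v = (\<Sum>x\<in>Poly_Mapping.keys v. Poly_Mapping.single [x] (Poly_Mapping.lookup v x))"

definition lie_rel :: "('a \<Rightarrow> 'a \<Rightarrow> ('a \<Rightarrow>\<^sub>0 'k::comm_ring_1)) \<Rightarrow> 'a \<Rightarrow> 'a \<Rightarrow> ('a list \<Rightarrow>\<^sub>0 'k)" where
  "lie_rel br a b = Poly_Mapping.single [a, b] 1 - Poly_Mapping.single [b, a] 1 - deg1 (br a b)"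

text \<open>Generators of the two-sided ideal I with U(g) = T(g)/I.\<close>
definition lie_ideal_gens :: "('a \<Rightarrow> 'a \<Rightarrow> ('a \<Rightarrow>\<^sub>0 'k::comm_ring_1)) \<Rightarrow> ('a list \<Rightarrow>\<^sub>0 'k) set" where
  "lie_ideal_gens br = {tmul (tmul u (lie_rel br a b)) w | u w a b. True}"

definition env_ideal :: "('a \<Rightarrow> 'a \<Rightarrow> ('a \<Rightarrow>\<^sub>0 'k::comm_ring_1)) \<Rightarrow> ('a list \<Rightarrow>\<^sub>0 'k) set" where
  "env_ideal br = lspan (lie_ideal_gens br)"

datatype vir_basis = L int | C

fun vir_br :: "vir_basis \<Rightarrow> vir_basis \<Rightarrow> (vir_basis \<Rightarrow>\<^sub>0 'k::field_char_0)" where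
  "vir_br (L n) (L m) =
     smult (of_int (n - m)) (Poly_Mapping.single (L (n + m)) 1)
     + (if m = - n then Poly_Mapping.single C (of_int (n * (n^2 - 1)) / 12) else 0)"
| "vir_br _ _ = 0"

text \<open>Verma module V(h,c) = U(Vir) \<otimes>_{U(Vir_0 + Vir_+)} k = U(Vir)/U(Vir){L_n (n>0), L_0 - h, C - c}.
  Its preimage in T(Vir) is the left ideal below (I_Vir + T \<cdot> generators); so
  V(h,c) = T(Vir) / verma_ideal h c, with Vir acting by left multiplication.\<close>
definition verma_ideal :: "'k::field_char_0 \<Rightarrow> 'k \<Rightarrow> (vir_basis list \<Rightarrow>\<^sub>0 'k) set" where
  "verma_ideal h c = lspan (lie_ideal_gens vir_br
     \<union> {tmul u (Poly_Mapping.single [L n] 1) | u n. n > 0}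
     \<union> {tmul u (Poly_Mapping.single [L 0] 1 - Poly_Mapping.single [] h) | u. True}
     \<union> {tmul u (Poly_Mapping.single [C] 1 - Poly_Mapping.single [] c) | u. True})"

text \<open>Basis index i :: nat stands for O_{i+1} = L_{i+1} - L_{-(i+1)}.\<close>
definition o_vec :: "nat \<Rightarrow> (vir_basis \<Rightarrow>\<^sub>0 'k::field_char_0)" where
  "o_vec i = Poly_Mapping.single (L (int i + 1)) 1 - Poly_Mapping.single (L (- (int i + 1))) 1"

text \<open>Structure constants of O in the basis O_n:
  [O_n, O_m] = (n - m) O_{n+m} - (n + m) sgn(n - m) O_{|n-m|}
  (central terms cancel).\<close>
definition o_br :: "nat \<Rightarrow> nat \<Rightarrow> (nat \<Rightarrow>\<^sub>0 'k::field_char_0)" where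
  "o_br i j =
     smult (of_int (int i - int j)) (Poly_Mapping.single (i + j + 1) 1)
     + (if j < i then smult (- of_int (int i + int j + 2)) (Poly_Mapping.single (i - j - 1) 1)
        else if i < j then smult (of_int (int i + int j + 2)) (Poly_Mapping.single (j - i - 1) 1)
        else 0)"

end

theory Submission
  imports Defs
begin


instantiation list :: (type) monoid_add
begin
definition zero_list_def: "(0::'a list) = []"
definition plus_list_def: "(xs::'a list) + ys = xs @ ys"
instance by standard (auto simp: zero_list_def plus_list_def)
end

lemma pm_expand: "p = (\<Sum>x\<in>Poly_Mapping.keys p. Poly_Mapping.single x (Poly_Mapping.lookup p x))"
proof (rule poly_mapping_eqI)
  fix k
  have "Poly_Mapping.lookup (\<Sum>x\<in>Poly_Mapping.keys p. Poly_Mapping.single x (Poly_Mapping.lookup p x)) k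
     = (\<Sum>x\<in>Poly_Mapping.keys p. (Poly_Mapping.lookup p x when x = k))"
    by (simp add: lookup_sum lookup_single)
  also have "\<dots> = Poly_Mapping.lookup p k"
    by (cases "k \<in> Poly_Mapping.keys p") (auto simp: when_def in_keys_iff)
  finally show "Poly_Mapping.lookup p k = Poly_Mapping.lookup (\<Sum>x\<in>Poly_Mapping.keys p. Poly_Mapping.single x (Poly_Mapping.lookup p x)) k"
    by simp
qed

lemma tmul_eq: "tmul p q = p * (q::'a list \<Rightarrow>\<^sub>0 'k::semiring_0)"
proof -
  have "p * q = (\<Sum>x\<in>Poly_Mapping.keys p. Poly_Mapping.single x (Poly_Mapping.lookup p x)) *
                (\<Sum>y\<in>Poly_Mapping.keys q. Poly_Mapping.single y (Poly_Mapping.lookup q y))"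
    by (subst pm_expand[of p], subst pm_expand[of q], rule refl)
  also have "\<dots> = tmul p q"
    apply (simp add: tmul_def sum_distrib_left sum_distrib_right mult_single plus_list_def)
    by (rule sum.swap)
  finally show ?thesis by simp
qed

lemma lookup_smult [simp]: "Poly_Mapping.lookup (smult a p) x = a * Poly_Mapping.lookup p x"
  by (simp add: smult_def map.rep_eq when_def)

lemma smult_eq: "smult a p = Poly_Mapping.single [] a * p"
  unfolding smult_def using mult_map_scale_conv_mult[of a p] by (simp add: zero_list_def)

lemma one_list_pm: "(1::'a list \<Rightarrow>\<^sub>0 'k::semiring_1) = Poly_Mapping.single [] 1"
  by (simp add: zero_list_def[symmetric])


lemma smult_add_right: "smult a (p + q) = smult a p + smult (a::'k::comm_ring_1) q"
  by (rule poly_mapping_eqI) (simp add: lookup_add algebra_simps)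
lemma smult_add_left: "smult (a + b) p = smult a p + smult (b::'k::comm_ring_1) p"
  by (rule poly_mapping_eqI) (simp add: lookup_add algebra_simps)
lemma smult_smult [simp]: "smult a (smult b p) = smult (a * b) (p::_ \<Rightarrow>\<^sub>0 'k::comm_ring_1)"
  by (rule poly_mapping_eqI) (simp add: algebra_simps)
lemma smult_zero_right [simp]: "smult a 0 = (0::_ \<Rightarrow>\<^sub>0 'k::comm_ring_1)"
  by (rule poly_mapping_eqI) simp
lemma smult_zero_left [simp]: "smult 0 p = (0::_ \<Rightarrow>\<^sub>0 'k::comm_ring_1)"
  by (rule poly_mapping_eqI) simp
lemma smult_one [simp]: "smult 1 p = (p::_ \<Rightarrow>\<^sub>0 'k::comm_ring_1)"
  by (rule poly_mapping_eqI) simp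
lemma smult_minus_right: "smult a (- p) = - smult a (p::_ \<Rightarrow>\<^sub>0 'k::comm_ring_1)"
  by (rule poly_mapping_eqI) simp
lemma smult_diff_right: "smult a (p - q) = smult a p - smult a (q::_ \<Rightarrow>\<^sub>0 'k::comm_ring_1)"
  by (rule poly_mapping_eqI) (simp add: lookup_minus algebra_simps)
lemma smult_minus_left: "smult (- a) p = - smult a (p::_ \<Rightarrow>\<^sub>0 'k::comm_ring_1)"
  by (rule poly_mapping_eqI) simp
lemma smult_diff_left: "smult (a - b) p = smult a p - smult b (p::_ \<Rightarrow>\<^sub>0 'k::comm_ring_1)"
  by (rule poly_mapping_eqI) (simp add: lookup_minus algebra_simps)
lemma smult_single: "smult a (Poly_Mapping.single x b) = Poly_Mapping.single x (a * (b::'k::comm_ring_1))"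
  by (rule poly_mapping_eqI) (simp add: lookup_single when_def)
lemma smult_sum: "smult a (sum f A) = (\<Sum>x\<in>A. smult a (f x :: _ \<Rightarrow>\<^sub>0 'k::comm_ring_1))"
  by (induction A rule: infinite_finite_induct) (auto simp: smult_add_right)
lemma smult_neg1: "smult (-1) p = - (p::_ \<Rightarrow>\<^sub>0 'k::comm_ring_1)"
  by (rule poly_mapping_eqI) simp

lemma single_comm: "Poly_Mapping.single [] a * p = p * Poly_Mapping.single [] (a::'k::comm_ring_1)"
proof -
  have "Poly_Mapping.single [] a * (\<Sum>x\<in>Poly_Mapping.keys p. Poly_Mapping.single x (Poly_Mapping.lookup p x))
     = (\<Sum>x\<in>Poly_Mapping.keys p. Poly_Mapping.single x (Poly_Mapping.lookup p x)) * Poly_Mapping.single [] a"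
    by (simp add: sum_distrib_left sum_distrib_right mult_single plus_list_def mult.commute)
  then show ?thesis using pm_expand[of p] by simp
qed

lemma smult_mult_left: "smult a p * q = smult a (p * (q::'b list \<Rightarrow>\<^sub>0 'k::comm_ring_1))"
  by (simp add: smult_eq mult.assoc)
lemma smult_mult_right: "p * smult a q = smult a (p * (q::'b list \<Rightarrow>\<^sub>0 'k::comm_ring_1))"
proof -
  have "p * (Poly_Mapping.single [] a * q) = p * (q * Poly_Mapping.single [] a)"
    by (simp only: single_comm)
  also have "\<dots> = (p * q) * Poly_Mapping.single [] a" by (simp only: mult.assoc)
  also have "\<dots> = Poly_Mapping.single [] a * (p * q)" by (simp only: single_comm)
  finally show ?thesis by (simp add: smult_eq)
qed

lemma single_word_mult: "Poly_Mapping.single u a * Poly_Mapping.single v b = Poly_Mapping.single (u @ v) (a * (b::'k::comm_ring_1))"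
  by (simp add: mult_single plus_list_def)

lemma single_as_smult: "Poly_Mapping.single x a = smult a (Poly_Mapping.single x (1::'k::comm_ring_1))"
  by (simp add: smult_single)

section \<open>Linear extension\<close>

definition islin :: "(('a \<Rightarrow>\<^sub>0 'k::comm_ring_1) \<Rightarrow> ('b \<Rightarrow>\<^sub>0 'k)) \<Rightarrow> bool" where
  "islin F \<longleftrightarrow> (\<forall>x y. F (x + y) = F x + F y) \<and> (\<forall>a x. F (smult a x) = smult a (F x))"

lemma islinI: "(\<And>x y. F (x + y) = F x + F y) \<Longrightarrow> (\<And>a x. F (smult a x) = smult a (F x)) \<Longrightarrow> islin F"
  by (simp add: islin_def)

lemma islin_add: "islin F \<Longrightarrow> F (x + y) = F x + F y" by (simp add: islin_def)
lemma islin_smult: "islin F \<Longrightarrow> F (smult a x) = smult a (F x)" by (simp add: islin_def)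
lemma islin_zero: "islin F \<Longrightarrow> F 0 = 0"
  using islin_smult[of F 0 0] by simp
lemma islin_minus: "islin F \<Longrightarrow> F (- x) = - F x"
  using islin_smult[of F "-1" x] by (simp add: smult_neg1)
lemma islin_diff: "islin F \<Longrightarrow> F (x - y) = F x - F y"
  using islin_add[of F x "- y"] islin_minus[of F y] by simp
lemma islin_sum: "islin F \<Longrightarrow> F (sum f A) = (\<Sum>x\<in>A. F (f x))"
  by (induction A rule: infinite_finite_induct) (auto simp: islin_zero islin_add)

definition lin :: "('a \<Rightarrow> ('b \<Rightarrow>\<^sub>0 'k::comm_ring_1)) \<Rightarrow> ('a \<Rightarrow>\<^sub>0 'k) \<Rightarrow> ('b \<Rightarrow>\<^sub>0 'k)" where
  "lin f p = (\<Sum>x\<in>Poly_Mapping.keys p. smult (Poly_Mapping.lookup p x) (f x))"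

lemma lin_superset: "finite A \<Longrightarrow> Poly_Mapping.keys p \<subseteq> A \<Longrightarrow>
   lin f p = (\<Sum>x\<in>A. smult (Poly_Mapping.lookup p x) (f x))"
  unfolding lin_def by (rule sum.mono_neutral_left) (auto simp: not_in_keys_iff_lookup_eq_zero)

lemma lin_add: "lin f (p + q) = lin f p + lin f q"
proof -
  let ?A = "Poly_Mapping.keys p \<union> Poly_Mapping.keys q"
  have "lin f (p + q) = (\<Sum>x\<in>?A. smult (Poly_Mapping.lookup (p+q) x) (f x))"
    by (rule lin_superset) (auto simp: keys_add)
  also have "\<dots> = (\<Sum>x\<in>?A. smult (Poly_Mapping.lookup p x) (f x)) + (\<Sum>x\<in>?A. smult (Poly_Mapping.lookup q x) (f x))"
    by (simp add: lookup_add smult_add_left sum.distrib)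
  also have "\<dots> = lin f p + lin f q"
    by (simp add: lin_superset[symmetric])
  finally show ?thesis .
qed

lemma keys_smult_sub: "Poly_Mapping.keys (smult a p) \<subseteq> Poly_Mapping.keys p"
proof
  fix x assume x: "x \<in> Poly_Mapping.keys (smult a p)"
  show "x \<in> Poly_Mapping.keys p"
  proof (rule ccontr)
    assume "x \<notin> Poly_Mapping.keys p"
    then have "Poly_Mapping.lookup (smult a p) x = 0" by (simp add: not_in_keys_iff_lookup_eq_zero)
    with x show False using not_in_keys_iff_lookup_eq_zero by blast
  qed
qed

lemma lin_smult: "lin f (smult a p) = smult a (lin f p)"
proof -
  have "lin f (smult a p) = (\<Sum>x\<in>Poly_Mapping.keys p. smult (Poly_Mapping.lookup (smult a p) x) (f x))"
    by (rule lin_superset) (auto simp: keys_smult_sub)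
  then show ?thesis by (simp add: lin_def smult_sum)
qed

lemma islin_lin: "islin (lin f)"
  by (simp add: islinI lin_add lin_smult)

lemma lin_zero [simp]: "lin f 0 = 0" by (simp add: lin_def)
lemma lin_single: "lin f (Poly_Mapping.single x a) = smult a (f x)"
  by (cases "a = 0") (simp_all add: lin_def)
lemma lin_single1 [simp]: "lin f (Poly_Mapping.single x 1) = f x"
  by (simp add: lin_single)
lemma lin_minus: "lin f (- p) = - lin f p" by (rule islin_minus[OF islin_lin])
lemma lin_diff: "lin f (p - q) = lin f p - lin f q" by (rule islin_diff[OF islin_lin])

lemma lin_cong: "(\<And>x. x \<in> Poly_Mapping.keys p \<Longrightarrow> f x = g x) \<Longrightarrow> lin f p = lin g p"
  by (simp add: lin_def)

lemma lin_fadd: "lin (\<lambda>x. f x + g x) p = lin f p + lin g p"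
  by (simp add: lin_def smult_add_right sum.distrib)
lemma lin_fsmult: "lin (\<lambda>x. smult a (f x)) p = smult a (lin f p)"
  by (simp add: lin_def smult_sum mult.commute)
lemma lin_fminus: "lin (\<lambda>x. - f x) p = - lin f p"
  by (simp add: lin_def smult_minus_right sum_negf)
lemma lin_fdiff: "lin (\<lambda>x. f x - g x) p = lin f p - lin g p"
  by (simp add: lin_def smult_diff_right sum_subtractf)
lemma lin_fzero [simp]: "lin (\<lambda>x. 0) p = 0"
  by (simp add: lin_def)

lemma islin_comp_lin: "islin F \<Longrightarrow> F (lin f p) = lin (\<lambda>x. F (f x)) p"
  by (simp add: lin_def islin_sum islin_smult)

lemma lin_expand: "lin (\<lambda>x. Poly_Mapping.single x 1) p = p"
  by (simp add: lin_def smult_single) (rule pm_expand[symmetric])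

lemma islin_unique: "islin F \<Longrightarrow> F p = lin (\<lambda>x. F (Poly_Mapping.single x 1)) p"
  using islin_comp_lin[of F "\<lambda>x. Poly_Mapping.single x 1" p] by (simp add: lin_expand)

lemma islin_eqI: "islin F \<Longrightarrow> islin G \<Longrightarrow> (\<And>x. F (Poly_Mapping.single x 1) = G (Poly_Mapping.single x 1)) \<Longrightarrow> F p = G p"
  by (simp add: islin_unique[of F p] islin_unique[of G p])

lemma islin_eqI_on: "islin F \<Longrightarrow> islin G \<Longrightarrow> (\<And>x. x \<in> Poly_Mapping.keys p \<Longrightarrow> F (Poly_Mapping.single x 1) = G (Poly_Mapping.single x 1)) \<Longrightarrow> F p = G p"
  by (simp add: islin_unique[of F p] islin_unique[of G p] cong: lin_cong)

lemma keys_lin: "Poly_Mapping.keys (lin f p) \<subseteq> (\<Union>x\<in>Poly_Mapping.keys p. Poly_Mapping.keys (f x))"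
proof -
  have "Poly_Mapping.keys (lin f p) \<subseteq> (\<Union>x\<in>Poly_Mapping.keys p. Poly_Mapping.keys (smult (Poly_Mapping.lookup p x) (f x)))"
    unfolding lin_def by (rule keys_sum)
  also have "\<dots> \<subseteq> (\<Union>x\<in>Poly_Mapping.keys p. Poly_Mapping.keys (f x))"
    by (rule UN_mono) (simp_all add: keys_smult_sub)
  finally show ?thesis .
qed

lemma islin_mult_left: "islin (\<lambda>q. p * (q::'b list \<Rightarrow>\<^sub>0 'k::comm_ring_1))"
  by (rule islinI) (simp_all add: distrib_left smult_mult_right)
lemma islin_mult_right: "islin (\<lambda>p. p * (q::'b list \<Rightarrow>\<^sub>0 'k::comm_ring_1))"
  by (rule islinI) (simp_all add: distrib_right smult_mult_left)
lemma islin_id: "islin (\<lambda>x. x)" by (rule islinI) simp_all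
lemma islin_compose: "islin F \<Longrightarrow> islin G \<Longrightarrow> islin (\<lambda>x. F (G x))"
  by (simp add: islin_def)
lemma islin_plus: "islin F \<Longrightarrow> islin G \<Longrightarrow> islin (\<lambda>x. F x + G x)"
  by (simp add: islin_def smult_add_right)
lemma islin_minusf: "islin F \<Longrightarrow> islin G \<Longrightarrow> islin (\<lambda>x. F x - G x)"
  by (simp add: islin_def smult_diff_right)
lemma islin_const0: "islin (\<lambda>x. 0)"
  by (simp add: islin_def)

lemma islin_lin_fun: assumes "\<And>x. islin (\<lambda>p. f p x)" shows "islin (\<lambda>p. lin (f p) q)"
proof (rule islinI)
  fix x y
  have "f (x+y) = (\<lambda>z. f x z + f y z)" by (rule ext) (simp add: islin_add[OF assms])
  then show "lin (f (x + y)) q = lin (f x) q + lin (f y) q" by (simp add: lin_fadd)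
next
  fix a x
  have "f (smult a x) = (\<lambda>z. smult a (f x z))" by (rule ext) (simp add: islin_smult[OF assms])
  then show "lin (f (smult a x)) q = smult a (lin (f x) q)" by (simp add: lin_fsmult)
qed

lemma lspan_add: "x \<in> lspan S \<Longrightarrow> y \<in> lspan S \<Longrightarrow> x + y \<in> lspan S"
  by (induction x rule: lspan.induct) (auto simp: add.assoc intro: lspan.intros)

lemma lspan_smult: "x \<in> lspan S \<Longrightarrow> smult a (x::_\<Rightarrow>\<^sub>0 'k::comm_ring_1) \<in> lspan S"
  by (induction x rule: lspan.induct) (auto simp: smult_add_right intro: lspan.intros)

lemma lspan_base: "x \<in> S \<Longrightarrow> (x::_\<Rightarrow>\<^sub>0 'k::comm_ring_1) \<in> lspan S"
  using lspan_step[of x S 0 1] lspan_zero[of S] by simp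

lemma lspan_minus: "x \<in> lspan S \<Longrightarrow> - (x::_\<Rightarrow>\<^sub>0 'k::comm_ring_1) \<in> lspan S"
  using lspan_smult[of x S "-1"] by (simp add: smult_neg1)

lemma lspan_diff: "x \<in> lspan S \<Longrightarrow> y \<in> lspan S \<Longrightarrow> x - (y::_\<Rightarrow>\<^sub>0 'k::comm_ring_1) \<in> lspan S"
  using lspan_add[of x S "- y"] lspan_minus[of y S] by simp

lemma lspan_sum: "(\<And>x. x \<in> A \<Longrightarrow> f x \<in> lspan S) \<Longrightarrow> sum f A \<in> lspan S"
  by (induction A rule: infinite_finite_induct) (auto intro: lspan_add lspan.intros)

lemma lspan_lin: "(\<And>x. x \<in> Poly_Mapping.keys p \<Longrightarrow> f x \<in> lspan S) \<Longrightarrow> lin f p \<in> lspan (S::(_\<Rightarrow>\<^sub>0 'k::comm_ring_1) set)"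
  unfolding lin_def by (rule lspan_sum) (simp add: lspan_smult)

lemma lspan_mono: assumes "S \<subseteq> T" "x \<in> lspan S" shows "x \<in> lspan T"
  using assms(2) by (induction x rule: lspan.induct) (use assms(1) in \<open>auto intro: lspan.intros\<close>)

lemma lspan_image: assumes "islin F" "\<And>x. x \<in> S \<Longrightarrow> F x \<in> lspan T" "x \<in> lspan S" shows "F x \<in> lspan T"
  using assms(3)
proof (induction x rule: lspan.induct)
  case lspan_zero
  then show ?case by (simp add: islin_zero[OF assms(1)] lspan.lspan_zero)
next
  case (lspan_step x y a)
  have "F (smult a x + y) = smult a (F x) + F y"
    by (simp add: islin_add[OF assms(1)] islin_smult[OF assms(1)])
  then show ?case using lspan_step assms(2) by (simp add: lspan_add lspan_smult)
qed

lemma lspan_eq_diff: "x - y \<in> lspan S \<Longrightarrow> y - z \<in> lspan S \<Longrightarrow> x - (z::_\<Rightarrow>\<^sub>0 'k::comm_ring_1) \<in> lspan S"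
  using lspan_add[of "x - y" S "y - z"] by simp

lemma lspan_linear_vanish: "islin F \<Longrightarrow> (\<And>x. x \<in> Poly_Mapping.keys p \<Longrightarrow> F (Poly_Mapping.single x 1) \<in> lspan S) \<Longrightarrow> F p \<in> lspan S"
  by (simp add: islin_unique[of F p] lspan_lin)



section \<open>Generic Lie bracket extension\<close>

definition brk :: "('a \<Rightarrow> 'a \<Rightarrow> ('a \<Rightarrow>\<^sub>0 'k::comm_ring_1)) \<Rightarrow> ('a \<Rightarrow>\<^sub>0 'k) \<Rightarrow> ('a \<Rightarrow>\<^sub>0 'k) \<Rightarrow> ('a \<Rightarrow>\<^sub>0 'k)" where
  "brk br Z W = lin (\<lambda>a. lin (\<lambda>b. br a b) W) Z"

lemma islin_brk1: "islin (\<lambda>Z. brk br Z W)"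
  unfolding brk_def by (rule islin_lin)
lemma islin_brk2: "islin (\<lambda>W. brk br Z W)"
  unfolding brk_def by (rule islin_lin_fun) (rule islin_lin)
lemma brk_single [simp]: "brk br (Poly_Mapping.single a 1) (Poly_Mapping.single b 1) = br a b"
  by (simp add: brk_def)
lemma brk_single1: "brk br (Poly_Mapping.single a 1) W = lin (br a) W"
  by (simp add: brk_def)

lemma deg1_lin: "deg1 v = lin (\<lambda>x. Poly_Mapping.single [x] 1) (v::_ \<Rightarrow>\<^sub>0 'k::comm_ring_1)"
  by (simp add: deg1_def lin_def smult_single)
lemma islin_deg1: "islin (deg1 :: (_ \<Rightarrow>\<^sub>0 'k::comm_ring_1) \<Rightarrow> _)"
  using islin_lin by (simp add: deg1_lin[abs_def])
lemma deg1_single [simp]: "deg1 (Poly_Mapping.single a (1::'k::comm_ring_1)) = Poly_Mapping.single [a] 1"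
  by (simp add: deg1_lin)

lemma lie_rel_eq: "lie_rel br a b = deg1 (Poly_Mapping.single a 1) * deg1 (Poly_Mapping.single b 1)
   - deg1 (Poly_Mapping.single b 1) * deg1 (Poly_Mapping.single a 1) - deg1 (br a b)"
  by (simp add: lie_rel_def single_word_mult)

lemma env_ideal_mult: assumes "x \<in> env_ideal br" shows "p * x * q \<in> env_ideal br"
  unfolding env_ideal_def
proof (rule lspan_image[of "\<lambda>x. p * x * q"])
  show "islin (\<lambda>x. p * x * q)"
    by (rule islin_compose[OF islin_mult_right islin_mult_left])
  show "x \<in> lspan (lie_ideal_gens br)" using assms by (simp add: env_ideal_def)
  fix x assume "x \<in> lie_ideal_gens br"
  then obtain u w a b where x: "x = tmul (tmul u (lie_rel br a b)) w"
    unfolding lie_ideal_gens_def by blast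
  have "p * x * q = tmul (tmul (p * u) (lie_rel br a b)) (w * q)"
    by (simp add: x tmul_eq mult.assoc)
  then show "p * x * q \<in> lspan (lie_ideal_gens br)"
    by (auto simp: lie_ideal_gens_def intro!: lspan_base)
qed

lemma env_ideal_left: "x \<in> env_ideal br \<Longrightarrow> p * x \<in> env_ideal br"
  using env_ideal_mult[of x br p 1] by simp
lemma env_ideal_right: "x \<in> env_ideal br \<Longrightarrow> x * q \<in> env_ideal br"
  using env_ideal_mult[of x br 1 q] by simp

lemma lie_vec: "u * (deg1 Z * deg1 W - deg1 W * deg1 Z - deg1 (brk br Z W)) * w \<in> env_ideal br"
proof -
  let ?F = "\<lambda>Z W. u * (deg1 Z * deg1 W - deg1 W * deg1 Z - deg1 (brk br Z W)) * w"
  have linW: "islin (?F Z)" for Z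
  proof (rule islinI)
    fix x y
    show "?F Z (x + y) = ?F Z x + ?F Z y"
      by (simp add: islin_add[OF islin_deg1] islin_add[OF islin_brk2] algebra_simps)
    fix a
    show "?F Z (smult a x) = smult a (?F Z x)"
      by (simp add: islin_smult[OF islin_deg1] islin_smult[OF islin_brk2] smult_mult_left smult_mult_right smult_diff_right[symmetric])
  qed
  have linZ: "islin (\<lambda>Z. ?F Z W)" for W
  proof (rule islinI)
    fix x y
    show "?F (x + y) W = ?F x W + ?F y W"
      by (simp add: islin_add[OF islin_deg1] islin_add[OF islin_brk1] algebra_simps)
    fix a
    show "?F (smult a x) W = smult a (?F x W)"
      by (simp add: islin_smult[OF islin_deg1] islin_smult[OF islin_brk1] smult_mult_left smult_mult_right smult_diff_right[symmetric])
  qed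
  have base: "?F (Poly_Mapping.single a 1) (Poly_Mapping.single b 1) \<in> env_ideal br" for a b
  proof -
    have "?F (Poly_Mapping.single a 1) (Poly_Mapping.single b 1) = tmul (tmul u (lie_rel br a b)) w"
      by (simp add: lie_rel_eq tmul_eq)
    then show ?thesis
      unfolding env_ideal_def lie_ideal_gens_def by (auto intro!: lspan_base)
  qed
  show ?thesis
    unfolding env_ideal_def
    by (rule lspan_linear_vanish[OF linZ], rule lspan_linear_vanish[OF linW])
       (use base in \<open>simp add: env_ideal_def\<close>)
qed

lemma lie_vec0: "deg1 Z * deg1 W - deg1 W * deg1 Z - deg1 (brk br Z W) \<in> env_ideal br"
  using lie_vec[of 1 Z W br 1] by simp



lemma brk_add1: "brk br (X + Y) W = brk br X W + brk br Y W" by (rule islin_add[OF islin_brk1])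
lemma brk_add2: "brk br W (X + Y) = brk br W X + brk br W Y" by (rule islin_add[OF islin_brk2])
lemma brk_diff1: "brk br (X - Y) W = brk br X W - brk br Y W" by (rule islin_diff[OF islin_brk1])
lemma brk_diff2: "brk br W (X - Y) = brk br W X - brk br W Y" by (rule islin_diff[OF islin_brk2])
lemma brk_smult1: "brk br (smult a X) W = smult a (brk br X W)" by (rule islin_smult[OF islin_brk1])
lemma brk_smult2: "brk br W (smult a X) = smult a (brk br W X)" by (rule islin_smult[OF islin_brk2])
lemma brk_minus1: "brk br (- X) W = - brk br X W" by (rule islin_minus[OF islin_brk1])
lemma brk_minus2: "brk br W (- X) = - brk br W X" by (rule islin_minus[OF islin_brk2])
lemma brk_zero1 [simp]: "brk br 0 W = 0" by (rule islin_zero[OF islin_brk1])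
lemma brk_zero2 [simp]: "brk br W 0 = 0" by (rule islin_zero[OF islin_brk2])
lemmas brk_lin = brk_add1 brk_add2 brk_diff1 brk_diff2 brk_smult1 brk_smult2 brk_minus1 brk_minus2

lemma deg1_add: "deg1 (X + Y) = deg1 X + deg1 (Y::_\<Rightarrow>\<^sub>0 'k::comm_ring_1)" by (rule islin_add[OF islin_deg1])
lemma deg1_diff: "deg1 (X - Y) = deg1 X - deg1 (Y::_\<Rightarrow>\<^sub>0 'k::comm_ring_1)" by (rule islin_diff[OF islin_deg1])
lemma deg1_smult: "deg1 (smult a X) = smult a (deg1 (X::_\<Rightarrow>\<^sub>0 'k::comm_ring_1))" by (rule islin_smult[OF islin_deg1])
lemma deg1_minus: "deg1 (- X) = - deg1 (X::_\<Rightarrow>\<^sub>0 'k::comm_ring_1)" by (rule islin_minus[OF islin_deg1])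
lemma deg1_zero [simp]: "deg1 (0::_\<Rightarrow>\<^sub>0 'k::comm_ring_1) = 0" by (rule islin_zero[OF islin_deg1])
lemmas deg1_lins = deg1_add deg1_diff deg1_smult deg1_minus

section \<open>Virasoro basics\<close>

definition ovir :: "(nat \<Rightarrow>\<^sub>0 'k::field_char_0) \<Rightarrow> (vir_basis \<Rightarrow>\<^sub>0 'k)" where
  "ovir P = lin o_vec P"

lemma islin_ovir: "islin ovir"
  unfolding ovir_def[abs_def] by (rule islin_lin)
lemma ovir_single [simp]: "ovir (Poly_Mapping.single k 1) = o_vec k"
  by (simp add: ovir_def)

fun isneg :: "vir_basis \<Rightarrow> bool" where
  "isneg (L n) = (n < 0)" | "isneg C = False"
fun bpart :: "vir_basis \<Rightarrow> vir_basis" where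
  "bpart (L n) = L \<bar>n\<bar>" | "bpart C = C"
fun kidx :: "vir_basis \<Rightarrow> nat" where
  "kidx (L n) = nat (- n - 1)" | "kidx C = 0"

lemma bpart_bpart [simp]: "bpart (bpart a) = bpart a" by (cases a) auto
lemma isneg_bpart [simp]: "\<not> isneg (bpart a)" by (cases a) auto
lemma bpart_id: "\<not> isneg a \<Longrightarrow> bpart a = a" by (cases a) auto

definition inBv :: "(vir_basis \<Rightarrow>\<^sub>0 'k::zero) \<Rightarrow> bool" where
  "inBv Z \<longleftrightarrow> (\<forall>a\<in>Poly_Mapping.keys Z. \<not> isneg a)"

lemma basis_decomp: "Poly_Mapping.single a (1::'k::field_char_0) = Poly_Mapping.single (bpart a) 1 - (if isneg a then o_vec (kidx a) else 0)"
proof (cases a)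
  case (L n)
  show ?thesis
  proof (cases "n < 0")
    case True
    have "int (nat (- n - 1)) + 1 = - n" using True by simp
    then show ?thesis using True L by (simp add: o_vec_def)
  qed (use L in auto)
qed simp

lemma vir_br_LL: "vir_br (L n) (L m) = Poly_Mapping.single (L (n + m)) (of_int (n - m))
   + Poly_Mapping.single C (if m = - n then of_int (n * (n^2 - 1)) / 12 else (0::'k::field_char_0))"
  by (simp add: smult_single)

lemma vir_br_C1 [simp]: "vir_br C b = 0" by simp
lemma vir_br_C2 [simp]: "vir_br a C = 0" by (cases a) simp_all

lemma lookup_vir_br_LL: "Poly_Mapping.lookup (vir_br (L n) (L m)) x =
   (if x = L (n + m) then of_int (n - m) else 0) + (if x = C \<and> m = - n then of_int (n * (n^2 - 1)) / 12 else (0::'k::field_char_0))"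
  by (simp only: vir_br_LL lookup_add lookup_single) (auto simp: when_def)

lemma vir_br_antisym: "vir_br b a = - (vir_br a b :: vir_basis \<Rightarrow>\<^sub>0 'k::field_char_0)"
proof (cases a)
  case (L n) note a = this
  show ?thesis
  proof (cases b)
    case (L m)
    show ?thesis
    proof (rule poly_mapping_eqI)
      fix x
      have e: "of_int (- (n * (n\<^sup>2 - 1))) = - (of_int (n * (n\<^sup>2 - 1)) :: 'k)" by simp
      show "Poly_Mapping.lookup (vir_br b a) x = Poly_Mapping.lookup (- vir_br a b) x"
        unfolding a L lookup_vir_br_LL lookup_uminus
        by (auto simp: add.commute of_int_diff power2_eq_square algebra_simps simp flip: add_divide_distrib)
    qed
  qed (use a in simp)
qed simp

lemma brk_antisym: "brk vir_br W Z = - brk vir_br Z (W :: vir_basis \<Rightarrow>\<^sub>0 'k::field_char_0)"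
proof -
  have "brk vir_br W Z = - brk vir_br Z W" for W
  proof (rule islin_eqI[where F="\<lambda>Z. brk vir_br W Z"])
    show "islin (\<lambda>Z. brk vir_br W Z)" by (rule islin_brk2)
    show "islin (\<lambda>Z. - brk vir_br Z W)" by (rule islinI) (simp_all add: brk_lin smult_minus_right)
    fix b
    show "brk vir_br W (Poly_Mapping.single b 1) = - brk vir_br (Poly_Mapping.single b 1) W"
    proof (rule islin_eqI[where F="\<lambda>W. brk vir_br W (Poly_Mapping.single b 1)"])
      show "islin (\<lambda>W. brk vir_br W (Poly_Mapping.single b 1))" by (rule islin_brk1)
      show "islin (\<lambda>W. - brk vir_br (Poly_Mapping.single b 1) W)" by (rule islinI) (simp_all add: brk_lin smult_minus_right)
      fix a show "brk vir_br (Poly_Mapping.single a 1) (Poly_Mapping.single b 1) = - brk vir_br (Poly_Mapping.single b 1) (Poly_Mapping.single a 1)"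
        by (simp add: vir_br_antisym[of a b])
    qed
  qed
  then show ?thesis .
qed

lemma brk_single2: "brk br X (Poly_Mapping.single c 1) = lin (\<lambda>x. br x c) X"
  by (simp add: brk_def)

lemma brk_LL_c: "brk vir_br (vir_br (L n) (L m)) (Poly_Mapping.single c 1) = smult (of_int (n - m)) (vir_br (L (n + m)) c :: _ \<Rightarrow>\<^sub>0 'k::field_char_0)"
  unfolding brk_single2 vir_br_LL by (simp add: lin_add lin_single)

lemma jac_int: "(n-m)*(n+m-p) + (m-p)*(m+p-n) + (p-n)*(p+n-m) = (0::int)"
  by (simp add: algebra_simps)

lemma jac_cent: "n+m+p = 0 \<Longrightarrow> (n-m)*((n+m)*((n+m)^2-1)) + (m-p)*((m+p)*((m+p)^2-1)) + (p-n)*((p+n)*((p+n)^2-1)) = (0::int)"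
proof -
  assume "n+m+p = 0"
  then have p: "p = - n - m" by simp
  show ?thesis unfolding p by (simp add: algebra_simps power2_eq_square)
qed

lemma comb3: "smult a1 (Poly_Mapping.single X b1 + Poly_Mapping.single Y c1) + smult a2 (Poly_Mapping.single X b2 + Poly_Mapping.single Y c2)
   + smult a3 (Poly_Mapping.single X b3 + Poly_Mapping.single Y c3)
   = Poly_Mapping.single X (a1*b1+a2*b2+a3*b3) + Poly_Mapping.single Y (a1*c1+a2*c2+(a3*c3::'k::comm_ring_1))"
  by (rule poly_mapping_eqI) (simp add: lookup_add lookup_single when_def algebra_simps)

lemma jac_basis: "brk vir_br (vir_br a b) (Poly_Mapping.single c 1) + brk vir_br (vir_br b c) (Poly_Mapping.single a 1)
   + brk vir_br (vir_br c a) (Poly_Mapping.single b 1) = (0 :: _ \<Rightarrow>\<^sub>0 'k::field_char_0)"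
proof (cases "a = C \<or> b = C \<or> c = C")
  case True
  then show ?thesis by (auto simp: brk_single2)
next
  case False
  then obtain n m p where abc: "a = L n" "b = L m" "c = L p"
    by (metis vir_basis.exhaust)
  have A: "of_int(n-m) * of_int(n+m-p) + of_int(m-p)*of_int(m+p-n) + of_int(p-n)*of_int(p+n-m) = (0::'k)"
    by (metis jac_int of_int_0 of_int_add of_int_mult)
  have B: "n+m+p = 0 \<Longrightarrow> of_int (n-m) * (of_int ((n+m)*((n+m)^2-1)) / 12) + of_int (m-p) * (of_int ((m+p)*((m+p)^2-1)) / 12)
     + of_int (p-n) * (of_int ((p+n)*((p+n)^2-1)) / 12) = (0::'k)"
  proof -
    assume "n+m+p = 0"
    then have "of_int ((n-m)*((n+m)*((n+m)^2-1)) + (m-p)*((m+p)*((m+p)^2-1)) + (p-n)*((p+n)*((p+n)^2-1))) = (0::'k)"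
      using jac_cent by simp
    then show ?thesis by (simp only: of_int_add of_int_mult times_divide_eq_right add_divide_distrib[symmetric]) simp
  qed
  have i2: "m + p + n = n + m + p" "p + n + m = n + m + p" by simp_all
  have "brk vir_br (vir_br a b) (Poly_Mapping.single c 1) + brk vir_br (vir_br b c) (Poly_Mapping.single a 1)
     + brk vir_br (vir_br c a) (Poly_Mapping.single b 1)
     = Poly_Mapping.single (L (n+m+p)) (of_int(n-m) * of_int(n+m-p) + of_int(m-p)*of_int(m+p-n) + of_int(p-n)*of_int(p+n-m))
     + Poly_Mapping.single C (of_int (n-m) * (if p = - (n + m) then of_int ((n+m)*((n+m)^2-1)) / 12 else 0)
         + of_int (m-p) * (if n = - (m + p) then of_int ((m+p)*((m+p)^2-1)) / 12 else 0)
         + of_int (p-n) * (if m = - (p + n) then of_int ((p+n)*((p+n)^2-1)) / 12 else (0::'k)))"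
    unfolding abc brk_LL_c unfolding vir_br_LL i2 by (rule comb3)
  also have "\<dots> = 0"
  proof (cases "n + m + p = 0")
    case True
    then have c: "(p = - (n + m)) = True" "(n = - (m + p)) = True" "(m = - (p + n)) = True" by simp_all
    show ?thesis by (simp only: c if_True A B[OF True] single_zero add_0_left add_0_right)
  next
    case False
    then have c: "(p = - (n + m)) = False" "(n = - (m + p)) = False" "(m = - (p + n)) = False" by auto
    show ?thesis by (simp only: c if_False A mult_zero_right single_zero add_0_left add_0_right)
  qed
  finally show ?thesis .
qed


lemma grp3: assumes "a + b + c = (0::'x::ab_group_add)" "c = - d" shows "a = d - b"
proof -
  have "a = (a + b + c) - b - c" by (simp add: algebra_simps)
  also have "\<dots> = d - b" using assms by (simp add: algebra_simps)
  finally show ?thesis .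
qed

lemma grp4: assumes "a + b + c = (0::'x::ab_group_add)" shows "- b = a + c"
proof -
  have "b + (a + c) = 0" using assms by (simp add: ac_simps)
  then show ?thesis by (rule minus_unique)
qed

lemma jacobi: "brk vir_br (brk vir_br X Y) Z + brk vir_br (brk vir_br Y Z) X + brk vir_br (brk vir_br Z X) Y = (0::vir_basis \<Rightarrow>\<^sub>0 'k::field_char_0)"
proof -
  define J where "J X Y Z = brk vir_br (brk vir_br X Y) Z + brk vir_br (brk vir_br Y Z) X + brk vir_br (brk vir_br Z X) (Y::vir_basis \<Rightarrow>\<^sub>0 'k)" for X Y Z
  have l1: "islin (\<lambda>X. J X Y Z)" for Y Z
    by (rule islinI) (simp_all add: J_def brk_lin smult_add_right algebra_simps)
  have l2: "islin (\<lambda>Y. J X Y Z)" for X Z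
    by (rule islinI) (simp_all add: J_def brk_lin smult_add_right algebra_simps)
  have l3: "islin (\<lambda>Z. J X Y Z)" for X Y
    by (rule islinI) (simp_all add: J_def brk_lin smult_add_right algebra_simps)
  have b0: "J (Poly_Mapping.single a 1) (Poly_Mapping.single b 1) (Poly_Mapping.single c 1) = 0" for a b c
    unfolding J_def brk_single by (rule jac_basis)
  have b1: "J (Poly_Mapping.single a 1) (Poly_Mapping.single b 1) Z = 0" for a b Z
    using islin_eqI[OF l3 islin_const0, of "Poly_Mapping.single a 1" "Poly_Mapping.single b 1" Z] b0 by simp
  have b2: "J (Poly_Mapping.single a 1) Y Z = 0" for a Y Z
    using islin_eqI[OF l2 islin_const0, of "Poly_Mapping.single a 1" Z Y] b1 by simp
  have "J X Y Z = 0"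
    using islin_eqI[OF l1 islin_const0, of Y Z X] b2 by simp
  then show ?thesis by (simp add: J_def)
qed

lemma jacobi1: "brk vir_br (brk vir_br X Y) Z = brk vir_br (brk vir_br X Z) Y - brk vir_br (brk vir_br Y Z) (X::vir_basis \<Rightarrow>\<^sub>0 'k::field_char_0)"
proof -
  have "brk vir_br (brk vir_br Z X) Y = - brk vir_br (brk vir_br X Z) Y"
    by (subst brk_antisym[of Z X]) (simp add: brk_lin)
  then show ?thesis using grp3[OF jacobi[of X Y Z]] by simp
qed

lemma jacobi2: "brk vir_br X (brk vir_br Y Z) = brk vir_br (brk vir_br X Y) Z - brk vir_br (brk vir_br X Z) (Y::vir_basis \<Rightarrow>\<^sub>0 'k::field_char_0)"
proof -
  have "brk vir_br X (brk vir_br Y Z) = - brk vir_br (brk vir_br Y Z) X" by (rule brk_antisym)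
  also have "\<dots> = brk vir_br (brk vir_br X Y) Z + brk vir_br (brk vir_br Z X) Y"
    using grp4[OF jacobi[of X Y Z]] .
  also have "brk vir_br (brk vir_br Z X) Y = - brk vir_br (brk vir_br X Z) Y"
    by (subst brk_antisym[of Z X]) (simp add: brk_lin)
  finally show ?thesis by simp
qed


lemma ovir_smult_single: "ovir (smult a (Poly_Mapping.single k 1)) = smult a (o_vec k)"
  by (simp add: islin_smult[OF islin_ovir])

lemma lookup_o_vec: "Poly_Mapping.lookup (o_vec k) x = (if x = L (int k + 1) then 1 else 0) - (if x = L (- (int k + 1)) then 1 else (0::'k::field_char_0))"
  by (simp add: o_vec_def lookup_minus lookup_single when_def)

lemma o_bracket: "brk vir_br (o_vec i) (o_vec j) = (ovir (o_br i j) :: vir_basis \<Rightarrow>\<^sub>0 'k::field_char_0)"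
proof (rule poly_mapping_eqI)
  fix x
  have lhs: "brk vir_br (o_vec i) (o_vec j) =
    vir_br (L (int i + 1)) (L (int j + 1)) - vir_br (L (int i + 1)) (L (- (int j + 1)))
    - vir_br (L (- (int i + 1))) (L (int j + 1)) + (vir_br (L (- (int i + 1))) (L (- (int j + 1))) :: _ \<Rightarrow>\<^sub>0 'k)"
    by (simp add: o_vec_def brk_lin)
  consider (lt) "i < j" | (eq) "i = j" | (gt) "j < i" by linarith
  then show "Poly_Mapping.lookup (brk vir_br (o_vec i) (o_vec j)) x = Poly_Mapping.lookup (ovir (o_br i j) :: _ \<Rightarrow>\<^sub>0 'k) x"
  proof cases
    case lt
    then have r: "ovir (o_br i j) = smult (of_int (int i - int j)) (o_vec (i + j + 1)) + smult (of_int (int i + int j + 2)) (o_vec (j - i - 1)) "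
      by (simp add: o_br_def islin_add[OF islin_ovir] ovir_smult_single)
    show ?thesis unfolding r lhs using lt
      by (cases x) (auto simp: lookup_add lookup_minus lookup_vir_br_LL lookup_o_vec lookup_single when_def of_nat_diff algebra_simps)
  next
    case eq
    then have r: "ovir (o_br i j) = smult (of_int (int i - int j)) (o_vec (i + j + 1))"
      by (simp add: o_br_def islin_add[OF islin_ovir] ovir_smult_single islin_zero[OF islin_ovir])
    show ?thesis
    proof (cases x)
      case C
      have hi: "(- int j - 1) * ((- int j - 1)\<^sup>2 - 1) = - ((int j + 1) * ((int j + 1)\<^sup>2 - 1))"
        by (simp add: power2_eq_square algebra_simps)
      show ?thesis unfolding r lhs using eq C
        by (simp add: lookup_add lookup_minus lookup_vir_br_LL lookup_o_vec hi lookup_single when_def del: of_int_mult of_int_diff of_int_add of_int_power)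
    next
      case (L k)
      show ?thesis unfolding r lhs using eq L
        by (auto simp: lookup_add lookup_minus lookup_vir_br_LL lookup_o_vec lookup_single when_def of_nat_diff algebra_simps)
    qed
  next
    case gt
    then have r: "ovir (o_br i j) = smult (of_int (int i - int j)) (o_vec (i + j + 1)) + smult (- of_int (int i + int j + 2)) (o_vec (i - j - 1)) "
      by (simp add: o_br_def islin_add[OF islin_ovir] ovir_smult_single)
    show ?thesis unfolding r lhs using gt
      by (cases x) (auto simp: lookup_add lookup_minus lookup_vir_br_LL lookup_o_vec lookup_single when_def of_nat_diff algebra_simps)
  qed
qed


lemma o_bracket_vec: "brk vir_br (ovir Q) (ovir P) = (ovir (brk o_br Q P) :: vir_basis \<Rightarrow>\<^sub>0 'k::field_char_0)"
proof -
  have "brk vir_br (ovir Q) (ovir P) = (ovir (brk o_br Q P) :: vir_basis \<Rightarrow>\<^sub>0 'k)" for P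
  proof (rule islin_eqI[where F="\<lambda>Q. brk vir_br (ovir Q) (ovir P)"])
    show "islin (\<lambda>Q. brk vir_br (ovir Q) (ovir P))" by (rule islin_compose[OF islin_brk1 islin_ovir])
    show "islin (\<lambda>Q. ovir (brk o_br Q P) :: vir_basis \<Rightarrow>\<^sub>0 'k)" by (rule islin_compose[OF islin_ovir islin_brk1])
    fix i
    show "brk vir_br (ovir (Poly_Mapping.single i 1)) (ovir P) = (ovir (brk o_br (Poly_Mapping.single i 1) P) :: vir_basis \<Rightarrow>\<^sub>0 'k)"
    proof (rule islin_eqI[where F="\<lambda>P. brk vir_br (ovir (Poly_Mapping.single i 1)) (ovir P)"])
      show "islin (\<lambda>P. brk vir_br (ovir (Poly_Mapping.single i 1)) (ovir P))" by (rule islin_compose[OF islin_brk2 islin_ovir])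
      show "islin (\<lambda>P. ovir (brk o_br (Poly_Mapping.single i 1) P) :: vir_basis \<Rightarrow>\<^sub>0 'k)" by (rule islin_compose[OF islin_ovir islin_brk2])
      fix j show "brk vir_br (ovir (Poly_Mapping.single i 1)) (ovir (Poly_Mapping.single j 1)) = (ovir (brk o_br (Poly_Mapping.single i 1) (Poly_Mapping.single j 1)) :: vir_basis \<Rightarrow>\<^sub>0 'k)"
        by (simp add: o_bracket)
    qed
  qed
  then show ?thesis .
qed

lemma keys_vir_br_B: "\<not> isneg a \<Longrightarrow> \<not> isneg b \<Longrightarrow> x \<in> Poly_Mapping.keys (vir_br a b :: _ \<Rightarrow>\<^sub>0 'k::field_char_0) \<Longrightarrow> \<not> isneg x"
proof (cases a; cases b)
  fix n m assume ab: "a = L n" "b = L m" and "\<not> isneg a" "\<not> isneg b" "x \<in> Poly_Mapping.keys (vir_br a b :: _ \<Rightarrow>\<^sub>0 'k)"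
  then have "n \<ge> 0" "m \<ge> 0" "Poly_Mapping.lookup (vir_br a b :: _ \<Rightarrow>\<^sub>0 'k) x \<noteq> 0" by (auto simp: lookup_not_eq_zero_eq_in_keys)
  then show "\<not> isneg x" unfolding ab lookup_vir_br_LL by (cases x) (auto split: if_splits)
qed auto

lemma inBv_brk: "inBv X \<Longrightarrow> inBv Y \<Longrightarrow> inBv (brk vir_br X Y :: _ \<Rightarrow>\<^sub>0 'k::field_char_0)"
proof -
  assume X: "inBv X" and Y: "inBv Y"
  have "Poly_Mapping.keys (brk vir_br X Y) \<subseteq> (\<Union>a\<in>Poly_Mapping.keys X. Poly_Mapping.keys (lin (vir_br a) Y :: _ \<Rightarrow>\<^sub>0 'k))"
    unfolding brk_def using keys_lin by (metis (no_types, lifting) SUP_cong)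
  also have "\<dots> \<subseteq> (\<Union>a\<in>Poly_Mapping.keys X. \<Union>b\<in>Poly_Mapping.keys Y. Poly_Mapping.keys (vir_br a b :: _ \<Rightarrow>\<^sub>0 'k))"
    by (rule UN_mono) (simp_all add: keys_lin)
  finally show ?thesis using X Y keys_vir_br_B unfolding inBv_def by blast
qed



context
  fixes h c :: "'k::field_char_0"
begin

fun chi :: "vir_basis \<Rightarrow> 'k" where
  "chi (L n) = (if n = 0 then h else 0)" | "chi C = c"

primrec Rw :: "nat list \<Rightarrow> vir_basis \<Rightarrow> (nat list \<Rightarrow>\<^sub>0 'k)" where
  "Rw [] a = smult (chi (bpart a)) 1 - (if isneg a then Poly_Mapping.single [kidx a] 1 else 0)"
| "Rw (i # m) a = Poly_Mapping.single [i] 1 * Rw m (bpart a)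
     + lin (\<lambda>e. Rw m e) (brk vir_br (Poly_Mapping.single (bpart a) 1) (o_vec i))
     - (if isneg a then Poly_Mapping.single (kidx a # i # m) 1 else 0)"

definition rho :: "(vir_basis \<Rightarrow>\<^sub>0 'k) \<Rightarrow> (nat list \<Rightarrow>\<^sub>0 'k) \<Rightarrow> (nat list \<Rightarrow>\<^sub>0 'k)" where
  "rho Z y = lin (\<lambda>a. lin (\<lambda>m. Rw m a) y) Z"

lemma islin_rho1: "islin (\<lambda>Z. rho Z y)"
  unfolding rho_def by (rule islin_lin)
lemma islin_rho2: "islin (rho Z)"
  unfolding rho_def[abs_def] by (rule islin_lin_fun) (rule islin_lin)

lemma rho_add1: "rho (X + Y) y = rho X y + rho Y y" by (rule islin_add[OF islin_rho1])
lemma rho_diff1: "rho (X - Y) y = rho X y - rho Y y" by (rule islin_diff[OF islin_rho1])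
lemma rho_smult1: "rho (smult a X) y = smult a (rho X y)" by (rule islin_smult[OF islin_rho1])
lemma rho_minus1: "rho (- X) y = - rho X y" by (rule islin_minus[OF islin_rho1])
lemma rho_zero1 [simp]: "rho 0 y = 0" by (rule islin_zero[OF islin_rho1])
lemma rho_add2: "rho Z (x + y) = rho Z x + rho Z y" by (rule islin_add[OF islin_rho2])
lemma rho_diff2: "rho Z (x - y) = rho Z x - rho Z y" by (rule islin_diff[OF islin_rho2])
lemma rho_smult2: "rho Z (smult a x) = smult a (rho Z x)" by (rule islin_smult[OF islin_rho2])
lemma rho_minus2: "rho Z (- x) = - rho Z x" by (rule islin_minus[OF islin_rho2])
lemma rho_zero2 [simp]: "rho Z 0 = 0" by (rule islin_zero[OF islin_rho2])
lemmas rho_lins = rho_add1 rho_diff1 rho_smult1 rho_minus1 rho_add2 rho_diff2 rho_smult2 rho_minus2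

lemma rho_ss [simp]: "rho (Poly_Mapping.single a 1) (Poly_Mapping.single m 1) = Rw m a"
  by (simp add: rho_def)
lemma rho_s2: "rho W (Poly_Mapping.single m 1) = lin (\<lambda>a. Rw m a) W"
  by (simp add: rho_def)

lemma Rw_neg: "Rw m a = Rw m (bpart a) - (if isneg a then Poly_Mapping.single (kidx a # m) 1 else 0)"
  by (cases m) simp_all

lemma R1: "rho (Poly_Mapping.single a 1) y = rho (Poly_Mapping.single (bpart a) 1) y
   - (if isneg a then Poly_Mapping.single [kidx a] 1 * y else 0)"
proof (cases "isneg a")
  case True
  show ?thesis
  proof (rule islin_eqI[where F="rho (Poly_Mapping.single a 1)"])
    show "islin (rho (Poly_Mapping.single a 1))" by (rule islin_rho2)
    show "islin (\<lambda>y. rho (Poly_Mapping.single (bpart a) 1) y - (if isneg a then Poly_Mapping.single [kidx a] 1 * y else 0))"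
      using True by (simp add: islin_minusf[OF islin_rho2 islin_mult_left])
    fix m show "rho (Poly_Mapping.single a 1) (Poly_Mapping.single m 1) =
         rho (Poly_Mapping.single (bpart a) 1) (Poly_Mapping.single m 1) -
         (if isneg a then Poly_Mapping.single [kidx a] 1 * Poly_Mapping.single m 1 else 0)"
      using True Rw_neg[of m a] by (simp add: single_word_mult)
  qed
qed (simp add: bpart_id)

lemma R2: "rho (o_vec i) y = Poly_Mapping.single [i] 1 * y"
proof -
  have "rho (Poly_Mapping.single (L (- (int i + 1))) 1) y = rho (Poly_Mapping.single (L (int i + 1)) 1) y - Poly_Mapping.single [i] 1 * y"
    using R1[of "L (- (int i + 1))" y] by (simp add: add.commute)
  then show ?thesis unfolding o_vec_def rho_diff1 by simp
qed

lemma R2v: "rho (ovir P) y = deg1 P * y"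
proof (rule islin_eqI[where F="\<lambda>P. rho (ovir P) y"])
  show "islin (\<lambda>P. rho (ovir P) y)" by (rule islin_compose[OF islin_rho1 islin_ovir])
  show "islin (\<lambda>P. deg1 P * y)" by (rule islin_compose[OF islin_mult_right islin_deg1])
qed (simp add: R2)

lemma R3a: assumes "\<not> isneg a"
  shows "rho (Poly_Mapping.single a 1) (Poly_Mapping.single [i] 1 * y) = Poly_Mapping.single [i] 1 * rho (Poly_Mapping.single a 1) y
     + rho (brk vir_br (Poly_Mapping.single a 1) (o_vec i)) y"
proof (rule islin_eqI[where F="\<lambda>y. rho (Poly_Mapping.single a 1) (Poly_Mapping.single [i] 1 * y)"])
  show "islin (\<lambda>y. rho (Poly_Mapping.single a 1) (Poly_Mapping.single [i] 1 * y))"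
    by (rule islin_compose[OF islin_rho2 islin_mult_left])
  show "islin (\<lambda>y. Poly_Mapping.single [i] 1 * rho (Poly_Mapping.single a 1) y + rho (brk vir_br (Poly_Mapping.single a 1) (o_vec i)) y)"
    by (rule islin_plus[OF islin_compose[OF islin_mult_left islin_rho2] islin_rho2])
  fix m
  show "rho (Poly_Mapping.single a 1) (Poly_Mapping.single [i] 1 * Poly_Mapping.single m 1) =
         Poly_Mapping.single [i] 1 * rho (Poly_Mapping.single a 1) (Poly_Mapping.single m 1) +
         rho (brk vir_br (Poly_Mapping.single a 1) (o_vec i)) (Poly_Mapping.single m 1)"
    using assms by (simp add: single_word_mult bpart_id rho_s2)
qed

lemma R3: assumes "inBv Z"
  shows "rho Z (Poly_Mapping.single [i] 1 * y) = Poly_Mapping.single [i] 1 * rho Z y + rho (brk vir_br Z (o_vec i)) y"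
proof (rule islin_eqI_on[where F="\<lambda>Z. rho Z (Poly_Mapping.single [i] 1 * y)"])
  show "islin (\<lambda>Z. rho Z (Poly_Mapping.single [i] 1 * y))" by (rule islin_rho1)
  show "islin (\<lambda>Z. Poly_Mapping.single [i] 1 * rho Z y + rho (brk vir_br Z (o_vec i)) y)"
    by (rule islin_plus[OF islin_compose[OF islin_mult_left islin_rho1] islin_compose[OF islin_rho1 islin_brk1]])
  fix a assume "a \<in> Poly_Mapping.keys Z"
  then have "\<not> isneg a" using assms by (simp add: inBv_def)
  then show "rho (Poly_Mapping.single a 1) (Poly_Mapping.single [i] 1 * y) =
         Poly_Mapping.single [i] 1 * rho (Poly_Mapping.single a 1) y + rho (brk vir_br (Poly_Mapping.single a 1) (o_vec i)) y"
    by (rule R3a)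
qed

lemma R3P: assumes "inBv Z"
  shows "rho Z (deg1 P * y) = deg1 P * rho Z y + rho (brk vir_br Z (ovir P)) y"
proof (rule islin_eqI[where F="\<lambda>P. rho Z (deg1 P * y)"])
  show "islin (\<lambda>P. rho Z (deg1 P * y))"
    by (rule islin_compose[OF islin_rho2 islin_compose[OF islin_mult_right islin_deg1]])
  show "islin (\<lambda>P. deg1 P * rho Z y + rho (brk vir_br Z (ovir P)) y)"
    by (rule islin_plus[OF islin_compose[OF islin_mult_right islin_deg1] islin_compose[OF islin_rho1 islin_compose[OF islin_brk2 islin_ovir]]])
  fix i show "rho Z (deg1 (Poly_Mapping.single i 1) * y) = deg1 (Poly_Mapping.single i 1) * rho Z y + rho (brk vir_br Z (ovir (Poly_Mapping.single i 1))) y"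
    using R3[OF assms] by simp
qed

definition bproj :: "(vir_basis \<Rightarrow>\<^sub>0 'k) \<Rightarrow> (vir_basis \<Rightarrow>\<^sub>0 'k)" where
  "bproj Z = lin (\<lambda>a. Poly_Mapping.single (bpart a) 1) Z"
definition oproj :: "(vir_basis \<Rightarrow>\<^sub>0 'k) \<Rightarrow> (nat \<Rightarrow>\<^sub>0 'k)" where
  "oproj Z = lin (\<lambda>a. if isneg a then Poly_Mapping.single (kidx a) 1 else 0) Z"

lemma decomp: "Z = bproj Z - ovir (oproj Z)"
proof (rule islin_eqI[where F="\<lambda>Z. Z"])
  show "islin (\<lambda>Z. Z :: vir_basis \<Rightarrow>\<^sub>0 'k)" by (rule islin_id)
  show "islin (\<lambda>Z. bproj Z - ovir (oproj Z))"
    unfolding bproj_def oproj_def by (rule islin_minusf[OF islin_lin islin_compose[OF islin_ovir islin_lin]])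
  fix a
  show "Poly_Mapping.single a (1::'k) = bproj (Poly_Mapping.single a 1) - ovir (oproj (Poly_Mapping.single a 1))"
    using basis_decomp[of a] by (cases "isneg a") (simp_all add: bproj_def oproj_def islin_zero[OF islin_ovir] bpart_id)
qed

lemma inBv_bproj: "inBv (bproj Z)"
  unfolding inBv_def bproj_def using keys_lin by fastforce

lemma rho_decomp: "rho Z y = rho (bproj Z) y - deg1 (oproj Z) * y"
proof -
  have "rho Z y = rho (bproj Z - ovir (oproj Z)) y" using decomp[of Z] by simp
  then show ?thesis by (simp add: rho_diff1 R2v)
qed

lemma rho_one: "\<not> isneg a \<Longrightarrow> rho (Poly_Mapping.single a 1) 1 = smult (chi a) 1"
  by (simp add: one_list_pm bpart_id)

lemma brk_Lo: "brk vir_br (Poly_Mapping.single a 1) (o_vec i) = vir_br a (L (int i + 1)) - vir_br a (L (- (int i + 1)))"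
  by (simp add: o_vec_def brk_lin)


definition Dc :: "(vir_basis \<Rightarrow>\<^sub>0 'k) \<Rightarrow> (vir_basis \<Rightarrow>\<^sub>0 'k) \<Rightarrow> (nat list \<Rightarrow>\<^sub>0 'k) \<Rightarrow> (nat list \<Rightarrow>\<^sub>0 'k)" where
  "Dc X Y y = rho X (rho Y y) - rho Y (rho X y) - rho (brk vir_br X Y) y"

lemma islin_Dc1: "islin (\<lambda>X. Dc X Y y)"
  unfolding Dc_def
  by (rule islinI) (simp_all add: rho_lins brk_lin smult_diff_right smult_add_right algebra_simps)
lemma islin_Dc2: "islin (\<lambda>Y. Dc X Y y)"
  unfolding Dc_def
  by (rule islinI) (simp_all add: rho_lins brk_lin smult_diff_right smult_add_right algebra_simps)
lemma islin_Dc3: "islin (Dc X Y)"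
  unfolding Dc_def[abs_def]
  by (rule islinI) (simp_all add: rho_lins smult_diff_right smult_add_right algebra_simps)

lemma Dc_antisym: "Dc Y X y = - Dc X Y y"
  unfolding Dc_def by (subst brk_antisym) (simp add: rho_lins algebra_simps)

lemma Dc_ovir1: "inBv Y \<Longrightarrow> Dc (ovir Q) Y y = 0"
  unfolding Dc_def R2v
  by (simp add: R3P brk_antisym[of "ovir Q" Y] rho_lins)

lemma Dc_ext_B:
  assumes P: "\<And>a b. \<not> isneg a \<Longrightarrow> \<not> isneg b \<Longrightarrow> Dc (Poly_Mapping.single a 1) (Poly_Mapping.single b 1) y = 0"
    and X: "inBv X" and Y: "inBv Y"
  shows "Dc X Y y = 0"
proof -
  have "Dc (Poly_Mapping.single a 1) Y y = 0" if a: "\<not> isneg a" for a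
    using islin_eqI_on[OF islin_Dc2 islin_const0, of Y "Poly_Mapping.single a 1" y] P[OF a] Y
    by (simp add: inBv_def)
  then show ?thesis
    using islin_eqI_on[OF islin_Dc1 islin_const0, of X Y y] X by (simp add: inBv_def)
qed

lemma Dc_mixed:
  assumes P: "\<And>a b. \<not> isneg a \<Longrightarrow> \<not> isneg b \<Longrightarrow> Dc (Poly_Mapping.single a 1) (Poly_Mapping.single b 1) y = 0"
    and Y: "inBv Y"
  shows "Dc W Y y = 0"
proof -
  have "Dc W Y y = Dc (bproj W - ovir (oproj W)) Y y" using decomp[of W] by simp
  also have "\<dots> = Dc (bproj W) Y y - Dc (ovir (oproj W)) Y y" by (rule islin_diff[OF islin_Dc1])
  also have "\<dots> = 0" using Dc_ext_B[OF P inBv_bproj Y] Dc_ovir1[OF Y] by simp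
  finally show ?thesis .
qed

lemma rho_br_one: "\<not> isneg a \<Longrightarrow> \<not> isneg b \<Longrightarrow> rho (vir_br a b) (Poly_Mapping.single [] 1) = 0"
proof (cases a; cases b)
  fix n m assume ab: "a = L n" "b = L m" and "\<not> isneg a" "\<not> isneg b"
  then have nm: "n \<ge> 0" "m \<ge> 0" by auto
  show ?thesis
  proof (cases "n = 0 \<and> m = 0")
    case True then show ?thesis using ab by simp
  next
    case False
    then have "n + m \<noteq> 0" "m \<noteq> - n" using nm by auto
    then show ?thesis using ab nm by (simp add: rho_s2 lin_add lin_single lin_smult)
  qed
qed auto

lemma F2: "\<not> isneg a \<Longrightarrow> \<not> isneg b \<Longrightarrow> Dc (Poly_Mapping.single a 1) (Poly_Mapping.single b 1) (Poly_Mapping.single m 1) = 0"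
proof (induction m arbitrary: a b)
  case Nil
  have 1: "(1::nat list \<Rightarrow>\<^sub>0 'k) = Poly_Mapping.single [] 1" by (rule one_list_pm)
  show ?case using Nil rho_br_one[OF Nil]
    unfolding Dc_def brk_single
    by (simp add: rho_one bpart_id rho_smult2 mult.commute)
next
  case (Cons i m)
  define X where "X = Poly_Mapping.single a (1::'k)"
  define Y where "Y = Poly_Mapping.single b (1::'k)"
  define Oi where "Oi = Poly_Mapping.single [i] (1::'k)"
  define M where "M = Poly_Mapping.single m (1::'k)"
  define BX where "BX = brk vir_br X (o_vec i)"
  define BY where "BY = brk vir_br Y (o_vec i)"
  have XB: "inBv X" "inBv Y" using Cons.prems by (simp_all add: X_def Y_def inBv_def)
  have w: "Poly_Mapping.single (i # m) 1 = Oi * M" by (simp add: Oi_def M_def single_word_mult)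
  have P: "Dc (Poly_Mapping.single a' 1) (Poly_Mapping.single b' 1) M = 0" if "\<not> isneg a'" "\<not> isneg b'" for a' b'
    using Cons.IH[OF that] by (simp add: M_def)
  have e1: "rho Y (Oi * y) = Oi * rho Y y + rho BY y" for y unfolding Oi_def BY_def by (rule R3[OF XB(2)])
  have e2: "rho X (Oi * y) = Oi * rho X y + rho BX y" for y unfolding Oi_def BX_def by (rule R3[OF XB(1)])
  have e5: "rho (brk vir_br X Y) (Oi * M) = Oi * rho (brk vir_br X Y) M + rho (brk vir_br (brk vir_br X Y) (o_vec i)) M"
    unfolding Oi_def by (rule R3[OF inBv_brk[OF XB]])
  have d0: "rho X (rho Y M) = rho Y (rho X M) + rho (brk vir_br X Y) M"
    using P[OF Cons.prems] by (simp add: Dc_def X_def Y_def algebra_simps)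
  have d1: "rho BX (rho Y M) = rho Y (rho BX M) + rho (brk vir_br BX Y) M"
    using Dc_mixed[OF P XB(2), of BX] by (simp add: Dc_def algebra_simps)
  have d2: "rho BY (rho X M) = rho X (rho BY M) + rho (brk vir_br BY X) M"
    using Dc_mixed[OF P XB(1), of BY] by (simp add: Dc_def algebra_simps)
  have jac: "brk vir_br (brk vir_br X Y) (o_vec i) = brk vir_br BX Y - brk vir_br BY X"
    unfolding BX_def BY_def by (rule jacobi1)
  have "Dc X Y (Oi * M) = 0"
    unfolding Dc_def e1 e2 e5 jac rho_add2 rho_diff1 d0 d1 d2 distrib_left
    by (simp add: algebra_simps)
  then show ?case by (simp add: w X_def Y_def)
qed


lemma J_diff: "x \<in> env_ideal br \<Longrightarrow> y \<in> env_ideal br \<Longrightarrow> x - y \<in> env_ideal (br::'a \<Rightarrow> 'a \<Rightarrow> 'a \<Rightarrow>\<^sub>0 'k)"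
  unfolding env_ideal_def by (rule lspan_diff)
lemma J_add: "x \<in> env_ideal br \<Longrightarrow> y \<in> env_ideal br \<Longrightarrow> x + y \<in> env_ideal (br::'a \<Rightarrow> 'a \<Rightarrow> 'a \<Rightarrow>\<^sub>0 'k)"
  unfolding env_ideal_def by (rule lspan_add)
lemma J_minus: "x \<in> env_ideal br \<Longrightarrow> - x \<in> env_ideal (br::'a \<Rightarrow> 'a \<Rightarrow> 'a \<Rightarrow>\<^sub>0 'k)"
  unfolding env_ideal_def by (rule lspan_minus)
lemma J_zero: "0 \<in> env_ideal br"
  unfolding env_ideal_def by (rule lspan_zero)
lemma J_gen: "u * lie_rel br a b * w \<in> env_ideal (br::'a \<Rightarrow> 'a \<Rightarrow> 'a \<Rightarrow>\<^sub>0 'k)"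
  unfolding env_ideal_def lie_ideal_gens_def by (rule lspan_base) (auto simp: tmul_eq)

lemma G: "rho Z (deg1 P * y) - deg1 P * rho Z y - rho (brk vir_br Z (ovir P)) y \<in> env_ideal o_br"
proof -
  define Gx where "Gx Z = rho Z (deg1 P * y) - deg1 P * rho Z y - rho (brk vir_br Z (ovir P)) y" for Z
  have lin: "islin Gx"
    unfolding Gx_def by (rule islinI) (simp_all add: rho_lins brk_lin smult_diff_right smult_add_right smult_mult_right algebra_simps)
  have "Gx Z = Gx (bproj Z - ovir (oproj Z))" using decomp[of Z] by simp
  also have "\<dots> = Gx (bproj Z) - Gx (ovir (oproj Z))" by (rule islin_diff[OF lin])
  finally have eq: "Gx Z = Gx (bproj Z) - Gx (ovir (oproj Z))" .
  have z: "Gx (bproj Z) = 0" unfolding Gx_def by (simp add: R3P[OF inBv_bproj])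
  have o: "Gx (ovir Q) = 1 * (deg1 Q * deg1 P - deg1 P * deg1 Q - deg1 (brk o_br Q P)) * y" for Q
    unfolding Gx_def R2v o_bracket_vec by (simp add: algebra_simps)
  show ?thesis using eq z o[of "oproj Z"] lie_vec[of 1 "oproj Z" P o_br y]
    by (simp add: Gx_def J_minus)
qed

lemma reduce_J:
  assumes "\<And>a. \<not> isneg a \<Longrightarrow> rho (Poly_Mapping.single a 1) x \<in> env_ideal o_br" and x: "x \<in> env_ideal o_br"
  shows "rho Z x \<in> env_ideal o_br"
proof -
  have "rho (bproj Z) x = lin (\<lambda>a. rho (Poly_Mapping.single a 1) x) (bproj Z)"
    by (rule islin_unique[OF islin_rho1])
  also have "\<dots> \<in> env_ideal o_br"
    unfolding env_ideal_def
    by (rule lspan_lin) (use assms(1) inBv_bproj[of Z] in \<open>auto simp: inBv_def env_ideal_def\<close>)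
  finally have "rho (bproj Z) x \<in> env_ideal o_br" .
  moreover have "deg1 (oproj Z) * x \<in> env_ideal o_br" by (rule env_ideal_left[OF x])
  ultimately show ?thesis by (simp add: rho_decomp[of Z x] J_diff)
qed

lemma F4word: "rho Z (Poly_Mapping.single u 1 * (lie_rel o_br i j :: nat list \<Rightarrow>\<^sub>0 'k) * w) \<in> env_ideal o_br"
proof (induction u arbitrary: Z)
  case Nil
  define r where "r = (lie_rel o_br i j :: nat list \<Rightarrow>\<^sub>0 'k)"
  have rJ: "r * w \<in> env_ideal o_br" using J_gen[of 1 o_br i j w] by (simp add: r_def)
  have "rho (Poly_Mapping.single a 1) (r * w) \<in> env_ideal o_br" if a: "\<not> isneg a" for a
  proof -
    define X where "X = Poly_Mapping.single a (1::'k)"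
    have XB: "inBv X" using a by (simp add: X_def inBv_def)
    define Oi where "Oi = Poly_Mapping.single [i] (1::'k)"
    define Oj where "Oj = Poly_Mapping.single [j] (1::'k)"
    define R where "R = (o_br i j :: nat \<Rightarrow>\<^sub>0 'k)"
    define BXi where "BXi = brk vir_br X (o_vec i)"
    define BXj where "BXj = brk vir_br X (o_vec j)"
    have r: "r = Oi * Oj - Oj * Oi - deg1 R" by (simp add: r_def lie_rel_eq Oi_def Oj_def R_def)
    have rw: "r * w = Oi * (Oj * w) - Oj * (Oi * w) - deg1 R * w" by (simp add: r algebra_simps)
    have e1: "rho X (Oi * y) = Oi * rho X y + rho BXi y" for y unfolding Oi_def BXi_def by (rule R3[OF XB])
    have e2: "rho X (Oj * y) = Oj * rho X y + rho BXj y" for y unfolding Oj_def BXj_def by (rule R3[OF XB])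
    have e5: "rho X (deg1 R * w) = deg1 R * rho X w + rho (brk vir_br X (ovir R)) w" by (rule R3P[OF XB])
    have jac: "brk vir_br X (ovir R) = brk vir_br BXi (o_vec j) - brk vir_br BXj (o_vec i)"
      unfolding R_def o_bracket[symmetric] BXi_def BXj_def by (rule jacobi2)
    define g1 where "g1 = rho BXi (Oj * w) - Oj * rho BXi w - rho (brk vir_br BXi (o_vec j)) w"
    define g2 where "g2 = rho BXj (Oi * w) - Oi * rho BXj w - rho (brk vir_br BXj (o_vec i)) w"
    have g1: "g1 \<in> env_ideal o_br" using G[of BXi "Poly_Mapping.single j 1" w] by (simp add: g1_def Oj_def)
    have g2: "g2 \<in> env_ideal o_br" using G[of BXj "Poly_Mapping.single i 1" w] by (simp add: g2_def Oi_def)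
    have "rho X (r * w) = r * rho X w + g1 - g2"
      unfolding rw unfolding rho_diff2 e1 e2 e5 jac rho_diff1 g1_def g2_def
      by (simp add: r algebra_simps)
    moreover have "r * rho X w \<in> env_ideal o_br" using J_gen[of 1 o_br i j "rho X w"] by (simp add: r_def)
    ultimately show ?thesis using g1 g2 by (simp add: X_def J_add J_diff)
  qed
  moreover have "Poly_Mapping.single [] 1 = (1 :: nat list \<Rightarrow>\<^sub>0 'k)" by (simp add: one_list_pm)
  ultimately show ?case using rJ by (simp add: r_def reduce_J mult.assoc)
next
  case (Cons k u)
  define x where "x = Poly_Mapping.single u 1 * (lie_rel o_br i j :: nat list \<Rightarrow>\<^sub>0 'k) * w"
  have w: "Poly_Mapping.single (k # u) 1 * (lie_rel o_br i j :: nat list \<Rightarrow>\<^sub>0 'k) * w = Poly_Mapping.single [k] 1 * x"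
  proof -
    have "Poly_Mapping.single (k # u) 1 = Poly_Mapping.single [k] 1 * Poly_Mapping.single u (1::'k)"
      by (simp add: single_word_mult)
    then show ?thesis by (simp add: x_def mult.assoc)
  qed
  have xJ: "x \<in> env_ideal o_br" unfolding x_def by (rule J_gen)
  have hX: "rho (Poly_Mapping.single a 1) (Poly_Mapping.single [k] 1 * x) \<in> env_ideal o_br" if a: "\<not> isneg a" for a
  proof -
    have XB: "inBv (Poly_Mapping.single a (1::'k))" using a by (simp add: inBv_def)
    show ?thesis unfolding R3[OF XB]
      using Cons.IH[of "Poly_Mapping.single a 1"] Cons.IH[of "brk vir_br (Poly_Mapping.single a 1) (o_vec k)"]
      by (simp add: x_def J_add env_ideal_left)
  qed
  show ?case unfolding w by (rule reduce_J[OF hX env_ideal_left[OF xJ]])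
qed

lemma F4: "x \<in> env_ideal o_br \<Longrightarrow> rho Z x \<in> env_ideal o_br"
  unfolding env_ideal_def
proof (rule lspan_image[OF islin_rho2])
  fix g :: "nat list \<Rightarrow>\<^sub>0 'k" assume "g \<in> lie_ideal_gens o_br"
  then obtain u w a b where g: "g = u * (lie_rel o_br a b :: nat list \<Rightarrow>\<^sub>0 'k) * w"
    unfolding lie_ideal_gens_def by (auto simp: tmul_eq)
  have "rho Z (u * (lie_rel o_br a b :: nat list \<Rightarrow>\<^sub>0 'k) * w) = lin (\<lambda>v. rho Z (Poly_Mapping.single v 1 * lie_rel o_br a b * w)) u"
    by (rule islin_unique[OF islin_compose[OF islin_rho2 islin_compose[OF islin_mult_right islin_mult_right]]])
  also have "\<dots> \<in> lspan (lie_ideal_gens o_br)"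
    by (rule lspan_lin) (use F4word in \<open>simp add: env_ideal_def\<close>)
  finally show "rho Z g \<in> lspan (lie_ideal_gens o_br)" by (simp add: g)
qed

lemma DcG: "Dc W (ovir Q) y \<in> env_ideal o_br"
  using G[of W Q y] by (simp add: Dc_def R2v)

lemma DcB: "inBv X \<Longrightarrow> inBv Y \<Longrightarrow> Dc X Y y = 0"
proof (rule Dc_ext_B)
  fix a b assume "\<not> isneg a" "\<not> isneg b"
  then show "Dc (Poly_Mapping.single a 1) (Poly_Mapping.single b 1) y = 0"
    using islin_eqI[OF islin_Dc3 islin_const0] F2 by blast
qed

lemma F3: "Dc W1 W2 y \<in> env_ideal o_br"
proof -
  have A: "Dc X W y \<in> env_ideal o_br" if X: "inBv X" for X W
  proof -
    have "Dc X W y = Dc X (bproj W - ovir (oproj W)) y" using decomp[of W] by simp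
    also have "\<dots> = Dc X (bproj W) y - Dc X (ovir (oproj W)) y" by (rule islin_diff[OF islin_Dc2])
    finally show ?thesis using DcB[OF X inBv_bproj] DcG by (simp add: J_minus)
  qed
  have "Dc W1 W2 y = Dc (bproj W1 - ovir (oproj W1)) W2 y" using decomp[of W1] by simp
  also have "\<dots> = Dc (bproj W1) W2 y - Dc (ovir (oproj W1)) W2 y" by (rule islin_diff[OF islin_Dc1])
  finally show ?thesis using A[OF inBv_bproj] DcG[of W2 "oproj W1" y] Dc_antisym[of "ovir (oproj W1)" W2 y]
    by (simp add: J_add)
qed

end



primrec phiw :: "nat list \<Rightarrow> (vir_basis list \<Rightarrow>\<^sub>0 'k::field_char_0)" where
  "phiw [] = 1" | "phiw (i # m) = deg1 (o_vec i) * phiw m"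

definition Phi :: "(nat list \<Rightarrow>\<^sub>0 'k::field_char_0) \<Rightarrow> (vir_basis list \<Rightarrow>\<^sub>0 'k)" where
  "Phi x = lin phiw x"

lemma islin_Phi: "islin Phi"
  unfolding Phi_def[abs_def] by (rule islin_lin)
lemma Phi_single [simp]: "Phi (Poly_Mapping.single m 1) = phiw m"
  by (simp add: Phi_def)
lemma one_nat_list: "(1 :: nat list \<Rightarrow>\<^sub>0 'k::field_char_0) = Poly_Mapping.single [] 1"
  by (rule one_list_pm)
lemma one_vir_list: "(1 :: vir_basis list \<Rightarrow>\<^sub>0 'k::field_char_0) = Poly_Mapping.single [] 1"
  by (rule one_list_pm)
lemma Phi_one [simp]: "Phi (1 :: nat list \<Rightarrow>\<^sub>0 'k::field_char_0) = 1"
  by (simp add: one_nat_list)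

lemma single_cons: "Poly_Mapping.single (a # w) 1 = Poly_Mapping.single [a] 1 * Poly_Mapping.single w (1::'k::comm_ring_1)"
  by (simp add: single_word_mult)

lemma phiw_append: "phiw (u @ v) = phiw u * (phiw v :: vir_basis list \<Rightarrow>\<^sub>0 'k::field_char_0)"
  by (induction u) (simp_all add: mult.assoc)

lemma Phi_mult: "Phi (x * y) = Phi x * (Phi y :: vir_basis list \<Rightarrow>\<^sub>0 'k::field_char_0)"
proof -
  have "Phi (x * y) = Phi x * (Phi y :: vir_basis list \<Rightarrow>\<^sub>0 'k)" for y
  proof (rule islin_eqI[where F="\<lambda>x. Phi (x * y)"])
    show "islin (\<lambda>x. Phi (x * y))" by (rule islin_compose[OF islin_Phi islin_mult_right])
    show "islin (\<lambda>x. Phi x * Phi y)" by (rule islin_compose[OF islin_mult_right islin_Phi])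
    fix u
    show "Phi (Poly_Mapping.single u 1 * y) = Phi (Poly_Mapping.single u 1) * Phi y"
    proof (rule islin_eqI[where F="\<lambda>y. Phi (Poly_Mapping.single u 1 * y)"])
      show "islin (\<lambda>y. Phi (Poly_Mapping.single u 1 * y))" by (rule islin_compose[OF islin_Phi islin_mult_left])
      show "islin (\<lambda>y. Phi (Poly_Mapping.single u 1) * Phi y)" by (rule islin_compose[OF islin_mult_left islin_Phi])
      fix v show "Phi (Poly_Mapping.single u 1 * Poly_Mapping.single v 1) = Phi (Poly_Mapping.single u 1) * Phi (Poly_Mapping.single v 1)"
        by (simp add: single_word_mult phiw_append)
    qed
  qed
  then show ?thesis .
qed

lemma Phi_deg1: "Phi (deg1 P) = deg1 (ovir P :: vir_basis \<Rightarrow>\<^sub>0 'k::field_char_0)"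
proof (rule islin_eqI[where F="\<lambda>P. Phi (deg1 P)"])
  show "islin (\<lambda>P. Phi (deg1 P))" by (rule islin_compose[OF islin_Phi islin_deg1])
  show "islin (\<lambda>P. deg1 (ovir P :: vir_basis \<Rightarrow>\<^sub>0 'k))" by (rule islin_compose[OF islin_deg1 islin_ovir])
qed simp

lemma Phi_o: "Phi (Poly_Mapping.single [i] 1 * x) = deg1 (o_vec i) * (Phi x :: vir_basis list \<Rightarrow>\<^sub>0 'k::field_char_0)"
  using Phi_mult[of "Poly_Mapping.single [i] 1" x] Phi_deg1[of "Poly_Mapping.single i 1"] by simp

lemma verma_left: "x \<in> verma_ideal h c \<Longrightarrow> p * x \<in> verma_ideal h (c::'k::field_char_0)"
  unfolding verma_ideal_def
proof (rule lspan_image[OF islin_mult_left])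
  fix g :: "vir_basis list \<Rightarrow>\<^sub>0 'k"
  assume g: "g \<in> lie_ideal_gens vir_br \<union> {tmul u (Poly_Mapping.single [L n] 1) |u n. 0 < n} \<union>
         {tmul u (Poly_Mapping.single [L 0] 1 - Poly_Mapping.single [] h) |u. True} \<union>
         {tmul u (Poly_Mapping.single [C] 1 - Poly_Mapping.single [] c) |u. True}"
  show "p * g \<in> lspan (lie_ideal_gens vir_br \<union> {tmul u (Poly_Mapping.single [L n] 1) |u n. 0 < n} \<union>
         {tmul u (Poly_Mapping.single [L 0] 1 - Poly_Mapping.single [] h) |u. True} \<union>
         {tmul u (Poly_Mapping.single [C] 1 - Poly_Mapping.single [] c) |u. True})"
    apply (rule lspan_base)
    using g unfolding lie_ideal_gens_def
    apply (simp add: tmul_eq)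
    apply (elim disjE exE conjE)
       apply (metis mult.assoc)
      apply (metis mult.assoc)
     apply (metis mult.assoc)
    apply (metis mult.assoc)
    done
qed

lemma env_verma: "x \<in> env_ideal vir_br \<Longrightarrow> x \<in> verma_ideal h (c::'k::field_char_0)"
  unfolding env_ideal_def verma_ideal_def by (rule lspan_mono[rotated]) auto

lemma V_add: "x \<in> verma_ideal h c \<Longrightarrow> y \<in> verma_ideal h c \<Longrightarrow> x + y \<in> verma_ideal h (c::'k::field_char_0)"
  unfolding verma_ideal_def by (rule lspan_add)
lemma V_diff: "x \<in> verma_ideal h c \<Longrightarrow> y \<in> verma_ideal h c \<Longrightarrow> x - y \<in> verma_ideal h (c::'k::field_char_0)"
  unfolding verma_ideal_def by (rule lspan_diff)
lemma V_zero: "0 \<in> verma_ideal h c"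
  unfolding verma_ideal_def by (rule lspan_zero)

lemma Phi_lie: "Phi (lie_rel o_br a b) = deg1 (o_vec a) * deg1 (o_vec b) - deg1 (o_vec b) * deg1 (o_vec a)
   - deg1 (brk vir_br (o_vec a) (o_vec b) :: vir_basis \<Rightarrow>\<^sub>0 'k::field_char_0)"
proof -
  have d: "Phi (deg1 (Poly_Mapping.single k 1)) = deg1 (o_vec k :: vir_basis \<Rightarrow>\<^sub>0 'k)" for k
    by (simp only: Phi_deg1 ovir_single)
  show ?thesis
    unfolding lie_rel_eq islin_diff[OF islin_Phi] Phi_mult d Phi_deg1 o_bracket by simp
qed

lemma Phi_J_env: assumes "x \<in> env_ideal o_br" shows "Phi x \<in> env_ideal (vir_br :: _ \<Rightarrow> _ \<Rightarrow> _ \<Rightarrow>\<^sub>0 'k::field_char_0)"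
  using assms unfolding env_ideal_def
proof (rule lspan_image[OF islin_Phi, rotated])
  fix g :: "nat list \<Rightarrow>\<^sub>0 'k" assume "g \<in> lie_ideal_gens o_br"
  then obtain u w a b where g: "g = u * (lie_rel o_br a b :: nat list \<Rightarrow>\<^sub>0 'k) * w"
    unfolding lie_ideal_gens_def by (auto simp: tmul_eq)
  have "Phi g = Phi u * (deg1 (o_vec a) * deg1 (o_vec b) - deg1 (o_vec b) * deg1 (o_vec a)
   - deg1 (brk vir_br (o_vec a) (o_vec b) :: vir_basis \<Rightarrow>\<^sub>0 'k)) * Phi w"
    by (simp add: g Phi_mult Phi_lie)
  then show "Phi g \<in> lspan (lie_ideal_gens vir_br)"
    using lie_vec[of "Phi u" "o_vec a" "o_vec b" vir_br "Phi w"] by (simp add: env_ideal_def)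
qed

lemma Phi_J: "x \<in> env_ideal o_br \<Longrightarrow> Phi x \<in> verma_ideal h (c::'k::field_char_0)"
  by (rule env_verma[OF Phi_J_env])



context
  fixes h c :: "'k::field_char_0"
begin

primrec psiw :: "vir_basis list \<Rightarrow> (nat list \<Rightarrow>\<^sub>0 'k)" where
  "psiw [] = 1" | "psiw (a # w) = rho h c (Poly_Mapping.single a 1) (psiw w)"

definition Psi :: "(vir_basis list \<Rightarrow>\<^sub>0 'k) \<Rightarrow> (nat list \<Rightarrow>\<^sub>0 'k)" where
  "Psi v = lin psiw v"

lemma islin_Psi: "islin Psi"
  unfolding Psi_def[abs_def] by (rule islin_lin)
lemma Psi_single [simp]: "Psi (Poly_Mapping.single w 1) = psiw w"
  by (simp add: Psi_def)

lemma Psi_deg1: "Psi (deg1 Z * v) = rho h c Z (Psi v)"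
proof -
  have "Psi (deg1 Z * v) = rho h c Z (Psi v)" for Z
  proof (rule islin_eqI[where F="\<lambda>v. Psi (deg1 Z * v)"])
    show "islin (\<lambda>v. Psi (deg1 Z * v))" by (rule islin_compose[OF islin_Psi islin_mult_left])
    show "islin (\<lambda>v. rho h c Z (Psi v))" by (rule islin_compose[OF islin_rho2 islin_Psi])
    fix w
    show "Psi (deg1 Z * Poly_Mapping.single w 1) = rho h c Z (Psi (Poly_Mapping.single w 1))"
    proof (rule islin_eqI[where F="\<lambda>Z. Psi (deg1 Z * Poly_Mapping.single w 1)"])
      show "islin (\<lambda>Z. Psi (deg1 Z * Poly_Mapping.single w 1))"
        by (rule islin_compose[OF islin_Psi islin_compose[OF islin_mult_right islin_deg1]])
      show "islin (\<lambda>Z. rho h c Z (Psi (Poly_Mapping.single w 1)))" by (rule islin_rho1)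
    qed (simp add: single_word_mult)
  qed
  then show ?thesis .
qed

lemma Psi_s: "Psi (Poly_Mapping.single [a] 1 * v) = rho h c (Poly_Mapping.single a 1) (Psi v)"
  using Psi_deg1[of "Poly_Mapping.single a 1" v] by simp

lemma Psi_Phi: "Psi (Phi x) = x"
proof (rule islin_eqI[where F="\<lambda>x. Psi (Phi x)"])
  show "islin (\<lambda>x. Psi (Phi x))" by (rule islin_compose[OF islin_Psi islin_Phi])
  show "islin (\<lambda>x. x :: nat list \<Rightarrow>\<^sub>0 'k)" by (rule islin_id)
  fix m
  show "Psi (Phi (Poly_Mapping.single m 1)) = Poly_Mapping.single m 1"
  proof (induction m)
    case Nil
    then show ?case by (simp add: one_vir_list one_nat_list)
  next
    case (Cons i m)
    then show ?case by (simp add: Psi_deg1 R2 single_word_mult)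
  qed
qed

lemma Psi_left: assumes "Psi y \<in> env_ideal o_br" shows "Psi (u * y) \<in> env_ideal o_br"
proof -
  have w: "Psi (Poly_Mapping.single v 1 * y) \<in> env_ideal o_br" for v
  proof (induction v)
    case Nil
    then show ?case using assms by (simp add: one_vir_list[symmetric])
  next
    case (Cons a v)
    have "Psi (Poly_Mapping.single (a # v) 1 * y) = rho h c (Poly_Mapping.single a 1) (Psi (Poly_Mapping.single v 1 * y))"
      by (simp add: single_cons[of a v] mult.assoc Psi_deg1[symmetric])
    then show ?case using F4[OF Cons.IH] by simp
  qed
  have "Psi (u * y) = lin (\<lambda>v. Psi (Poly_Mapping.single v 1 * y)) u"
    by (rule islin_unique[OF islin_compose[OF islin_Psi islin_mult_right]])
  also have "\<dots> \<in> env_ideal o_br"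
    unfolding env_ideal_def by (rule lspan_lin) (use w in \<open>simp add: env_ideal_def\<close>)
  finally show ?thesis .
qed

lemma Psi_V: assumes "x \<in> verma_ideal h c" shows "Psi x \<in> env_ideal o_br"
proof -
  let ?G = "lie_ideal_gens vir_br \<union> {tmul u (Poly_Mapping.single [L n] 1) |u n. 0 < n} \<union>
         {tmul u (Poly_Mapping.single [L 0] 1 - Poly_Mapping.single [] h) |u. True} \<union>
         {tmul u (Poly_Mapping.single [C] 1 - Poly_Mapping.single [] c) |u. True}"
  have gen: "Psi g \<in> env_ideal o_br" if g: "g \<in> ?G" for g
  proof -
    have one: "(Poly_Mapping.single [] 1 :: nat list \<Rightarrow>\<^sub>0 'k) = 1" by (simp add: one_nat_list)
    have cs: "g \<in> lie_ideal_gens vir_br \<or> g \<in> {tmul u (Poly_Mapping.single [L n] 1) |u n. 0 < n} \<or>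
         g \<in> {tmul u (Poly_Mapping.single [L 0] 1 - Poly_Mapping.single [] h) |u. True} \<or>
         g \<in> {tmul u (Poly_Mapping.single [C] 1 - Poly_Mapping.single [] c) |u. True}"
      using g by (simp only: Un_iff disj_assoc)
    then show ?thesis
    proof (elim disjE)
      assume "g \<in> lie_ideal_gens vir_br"
      then obtain u w a b where lie: "g = tmul (tmul u (lie_rel vir_br a b)) w"
        unfolding lie_ideal_gens_def by blast
      have e: "lie_rel vir_br a b * w = Poly_Mapping.single [a] 1 * (Poly_Mapping.single [b] 1 * w)
          - Poly_Mapping.single [b] 1 * (Poly_Mapping.single [a] 1 * w) - deg1 (vir_br a b) * (w :: vir_basis list \<Rightarrow>\<^sub>0 'k)"
        by (simp add: lie_rel_eq algebra_simps)
      have "Psi (lie_rel vir_br a b * w) = Dc h c (Poly_Mapping.single a 1) (Poly_Mapping.single b 1) (Psi w)"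
        unfolding e islin_diff[OF islin_Psi] Psi_s Psi_deg1 Dc_def brk_single ..
      then have "Psi (lie_rel vir_br a b * w) \<in> env_ideal o_br" by (simp only: F3)
      then have "Psi (u * (lie_rel vir_br a b * w)) \<in> env_ideal o_br" by (rule Psi_left)
      then show ?thesis by (simp add: lie tmul_eq mult.assoc)
    next
      assume "g \<in> {tmul u (Poly_Mapping.single [L n] 1) |u n. 0 < n}"
      then obtain u n where pos: "g = tmul u (Poly_Mapping.single [L n] 1)" "0 < n" by blast
      have "Psi (Poly_Mapping.single [L n] 1) = 0"
        using pos by (simp add: one_nat_list)
      then show ?thesis using pos by (simp add: Psi_left J_zero tmul_eq)
    next
      assume "g \<in> {tmul u (Poly_Mapping.single [L 0] 1 - Poly_Mapping.single [] h) |u. True}"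
      then obtain u where zero: "g = tmul u (Poly_Mapping.single [L 0] 1 - Poly_Mapping.single [] h)" by blast
      have "Psi (Poly_Mapping.single [L 0] 1 - Poly_Mapping.single [] h) = 0"
        by (simp add: islin_diff[OF islin_Psi] single_as_smult[of "[]" h] islin_smult[OF islin_Psi] one_nat_list)
      then show ?thesis using zero by (simp add: Psi_left J_zero tmul_eq)
    next
      assume "g \<in> {tmul u (Poly_Mapping.single [C] 1 - Poly_Mapping.single [] c) |u. True}"
      then obtain u where cen: "g = tmul u (Poly_Mapping.single [C] 1 - Poly_Mapping.single [] c)" by blast
      have "Psi (Poly_Mapping.single [C] 1 - Poly_Mapping.single [] c) = 0"
        by (simp add: islin_diff[OF islin_Psi] single_as_smult[of "[]" c] islin_smult[OF islin_Psi] one_nat_list)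
      then show ?thesis using cen by (simp add: Psi_left J_zero tmul_eq)
    qed
  qed
  show ?thesis unfolding env_ideal_def
    by (rule lspan_image[OF islin_Psi _ assms[unfolded verma_ideal_def]]) (rule gen[unfolded env_ideal_def])
qed

end



lemma V_lin: "(\<And>x. x \<in> Poly_Mapping.keys p \<Longrightarrow> f x \<in> verma_ideal h c) \<Longrightarrow> lin f p \<in> verma_ideal h (c::'k::field_char_0)"
  unfolding verma_ideal_def by (rule lspan_lin)
lemma V_gen1: "x \<in> lie_ideal_gens vir_br \<union> {tmul u (Poly_Mapping.single [L n] 1) |u n. 0 < n} \<union>
         {tmul u (Poly_Mapping.single [L 0] 1 - Poly_Mapping.single [] h) |u. True} \<union>
         {tmul u (Poly_Mapping.single [C] 1 - Poly_Mapping.single [] c) |u. True} \<Longrightarrow> x \<in> verma_ideal h (c::'k::field_char_0)"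
  unfolding verma_ideal_def by (rule lspan_base)

lemma V_L0: "Poly_Mapping.single [L 0] 1 - Poly_Mapping.single [] h \<in> verma_ideal h (c::'k::field_char_0)"
  by (rule V_gen1, rule UnI1, rule UnI2, rule CollectI, rule exI[of _ 1]) (simp add: tmul_eq)
lemma V_Ln: "0 < n \<Longrightarrow> Poly_Mapping.single [L n] 1 \<in> verma_ideal h (c::'k::field_char_0)"
  by (rule V_gen1, rule UnI1, rule UnI1, rule UnI2, rule CollectI, rule exI[of _ 1], rule exI[of _ n]) (simp add: tmul_eq)
lemma V_C: "Poly_Mapping.single [C] 1 - Poly_Mapping.single [] c \<in> verma_ideal h (c::'k::field_char_0)"
  by (rule V_gen1, rule UnI2, rule CollectI, rule exI[of _ 1]) (simp add: tmul_eq)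

context
  fixes h c :: "'k::field_char_0"
begin

definition Sx :: "(vir_basis \<Rightarrow>\<^sub>0 'k) \<Rightarrow> (nat list \<Rightarrow>\<^sub>0 'k) \<Rightarrow> (vir_basis list \<Rightarrow>\<^sub>0 'k)" where
  "Sx Z y = deg1 Z * Phi y - Phi (rho h c Z y)"

lemma islin_Sx1: "islin (\<lambda>Z. Sx Z y)"
  unfolding Sx_def
  by (rule islin_minusf[OF islin_compose[OF islin_mult_right islin_deg1] islin_compose[OF islin_Phi islin_rho1]])
lemma islin_Sx2: "islin (Sx Z)"
  unfolding Sx_def[abs_def]
  by (rule islin_minusf[OF islin_compose[OF islin_mult_left islin_Phi] islin_compose[OF islin_Phi islin_rho2]])

lemma reduce_V:
  assumes "\<And>a. \<not> isneg a \<Longrightarrow> Sx (Poly_Mapping.single a 1) y \<in> verma_ideal h c"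
  shows "Sx Z y \<in> verma_ideal h c"
proof -
  have "Sx Z y = Sx (bproj Z - ovir (oproj Z)) y" using decomp[of Z] by simp
  also have "\<dots> = Sx (bproj Z) y - Sx (ovir (oproj Z)) y" by (rule islin_diff[OF islin_Sx1])
  also have "Sx (ovir (oproj Z)) y = 0"
    unfolding Sx_def R2v Phi_mult Phi_deg1 by simp
  also have "Sx (bproj Z) y = lin (\<lambda>a. Sx (Poly_Mapping.single a 1) y) (bproj Z)"
    by (rule islin_unique[OF islin_Sx1])
  finally show ?thesis
    using assms inBv_bproj[of Z] by (simp add: V_lin inBv_def)
qed

lemma Sx_gen: "(\<And>a. Sx (Poly_Mapping.single a 1) y \<in> verma_ideal h c) \<Longrightarrow> Sx Z y \<in> verma_ideal h c"
  by (subst islin_unique[OF islin_Sx1]) (rule V_lin)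

lemma S_word: "Sx (Poly_Mapping.single a 1) (Poly_Mapping.single m 1) \<in> verma_ideal h c"
proof (induction m arbitrary: a)
  case Nil
  show ?case
  proof (rule reduce_V)
    fix a :: vir_basis assume a: "\<not> isneg a"
    have "Sx (Poly_Mapping.single a 1) (Poly_Mapping.single [] 1) = Poly_Mapping.single [a] 1 - smult (chi h c a) 1"
      using a by (simp add: Sx_def rho_one islin_smult[OF islin_Phi] one_nat_list[symmetric])
    also have "\<dots> \<in> verma_ideal h c"
    proof (cases a)
      case (L n)
      show ?thesis
      proof (cases "n = 0")
        case True
        then show ?thesis using L V_L0[where h=h and c=c] by (simp add: one_vir_list smult_single)
      next
        case False
        then have "0 < n" using a L by simp
        then show ?thesis using L False V_Ln[where n=n and h=h and c=c] by simp
      qed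
    next
      case C
      then show ?thesis using V_C[where h=h and c=c] by (simp add: one_vir_list smult_single)
    qed
    finally show "Sx (Poly_Mapping.single a 1) (Poly_Mapping.single [] 1) \<in> verma_ideal h c" .
  qed
next
  case (Cons i m)
  show ?case
  proof (rule reduce_V)
    fix a :: vir_basis assume a: "\<not> isneg a"
    define A where "A = Poly_Mapping.single a (1::'k)"
    define M where "M = Poly_Mapping.single m (1::'k)"
    define W where "W = brk vir_br A (o_vec i)"
    have Rw: "Rw h c (i # m) a = Poly_Mapping.single [i] 1 * rho h c A M + rho h c W M"
      using a by (simp add: A_def M_def W_def bpart_id rho_s2)
    have RA: "rho h c A (Poly_Mapping.single (i # m) 1) = Rw h c (i # m) a" by (simp add: A_def)
    have s1: "Sx A M \<in> verma_ideal h c" using Cons.IH by (simp add: A_def M_def)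
    have s2: "Sx W M \<in> verma_ideal h c" by (rule Sx_gen) (simp add: M_def Cons.IH)
    have l1: "1 * (deg1 A * deg1 (o_vec i) - deg1 (o_vec i) * deg1 A - deg1 (brk vir_br A (o_vec i))) * phiw m \<in> verma_ideal h c"
      by (rule env_verma[OF lie_vec])
    have "Sx A (Poly_Mapping.single (i # m) 1) = 1 * (deg1 A * deg1 (o_vec i) - deg1 (o_vec i) * deg1 A - deg1 (brk vir_br A (o_vec i))) * phiw m
       + deg1 (o_vec i) * Sx A M + Sx W M"
      unfolding Sx_def RA Rw islin_add[OF islin_Phi] Phi_o Phi_single phiw.simps M_def W_def[symmetric]
      by (simp only: algebra_simps mult_1_left)
    then show "Sx (Poly_Mapping.single a 1) (Poly_Mapping.single (i # m) 1) \<in> verma_ideal h c"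
      using l1 s1 s2 by (simp add: A_def V_add verma_left)
  qed
qed

lemma S: "Sx Z y \<in> verma_ideal h c"
proof (rule Sx_gen)
  fix a
  show "Sx (Poly_Mapping.single a 1) y \<in> verma_ideal h c"
    by (subst islin_unique[OF islin_Sx2]) (rule V_lin, rule S_word)
qed

lemma surj: "Phi (Psi h c v) - v \<in> verma_ideal h c"
proof -
  have w: "Phi (Psi h c (Poly_Mapping.single w 1)) - Poly_Mapping.single w 1 \<in> verma_ideal h c" for w
  proof (induction w)
    case Nil
    then show ?case by (simp add: one_vir_list V_zero)
  next
    case (Cons a w)
    define y where "y = psiw h c w"
    have "Phi (Psi h c (Poly_Mapping.single (a # w) 1)) - Poly_Mapping.single (a # w) 1
       = - Sx (Poly_Mapping.single a 1) y + deg1 (Poly_Mapping.single a 1) * (Phi y - Poly_Mapping.single w 1)"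
    proof -
      have p: "Phi (Psi h c (Poly_Mapping.single (a # w) 1)) = Phi (rho h c (Poly_Mapping.single a 1) y)" by (simp add: y_def)
      show ?thesis unfolding p unfolding single_cons[of a w] Sx_def by (simp add: y_def algebra_simps)
    qed
    moreover have "- Sx (Poly_Mapping.single a 1) y \<in> verma_ideal h c"
      using S[of "Poly_Mapping.single a 1" y] unfolding verma_ideal_def by (rule lspan_minus)
    ultimately show ?case using Cons.IH S by (simp add: y_def V_diff verma_left)
  qed
  have "Phi (Psi h c v) - v = lin (\<lambda>w. Phi (Psi h c (Poly_Mapping.single w 1)) - Poly_Mapping.single w 1) v"
    by (rule islin_unique[OF islin_minusf[OF islin_compose[OF islin_Phi islin_Psi] islin_id]])
  then show ?thesis using w by (simp add: V_lin)
qed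

end

theorem proposition3p3:
  fixes h c :: "'k::field_char_0"
  shows "\<exists>\<Phi> :: (nat list \<Rightarrow>\<^sub>0 'k) \<Rightarrow> (vir_basis list \<Rightarrow>\<^sub>0 'k).
           (\<forall>x y. \<Phi> (x + y) = \<Phi> x + \<Phi> y)
         \<and> (\<forall>a x. \<Phi> (smult a x) = smult a (\<Phi> x))
         \<and> (\<forall>i x. \<Phi> (tmul (Poly_Mapping.single [i] 1) x) - tmul (deg1 (o_vec i)) (\<Phi> x)
                    \<in> verma_ideal h c)
         \<and> (\<forall>x. \<Phi> x \<in> verma_ideal h c \<longleftrightarrow> x \<in> env_ideal o_br)
         \<and> (\<forall>v. \<exists>x. \<Phi> x - v \<in> verma_ideal h c)"
proof (intro exI[of _ Phi] conjI allI)
  fix x y :: "nat list \<Rightarrow>\<^sub>0 'k"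
  show "Phi (x + y) = Phi x + Phi y" by (rule islin_add[OF islin_Phi])
next
  fix a :: 'k and x :: "nat list \<Rightarrow>\<^sub>0 'k"
  show "Phi (smult a x) = smult a (Phi x)" by (rule islin_smult[OF islin_Phi])
next
  fix i and x :: "nat list \<Rightarrow>\<^sub>0 'k"
  show "Phi (tmul (Poly_Mapping.single [i] 1) x) - tmul (deg1 (o_vec i)) (Phi x) \<in> verma_ideal h c"
    by (simp add: tmul_eq Phi_o V_zero)
next
  fix x :: "nat list \<Rightarrow>\<^sub>0 'k"
  show "Phi x \<in> verma_ideal h c \<longleftrightarrow> x \<in> env_ideal o_br"
  proof
    assume "Phi x \<in> verma_ideal h c"
    then have "Psi h c (Phi x) \<in> env_ideal o_br" by (rule Psi_V)
    then show "x \<in> env_ideal o_br" by (simp add: Psi_Phi)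
  next
    assume "x \<in> env_ideal o_br"
    then show "Phi x \<in> verma_ideal h c" by (rule Phi_J)
  qed
next
  fix v :: "vir_basis list \<Rightarrow>\<^sub>0 'k"
  show "\<exists>x. Phi x - v \<in> verma_ideal h c" using surj by blast
qed

end
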